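(* Let $G=M(2)$, the universal covering group of the group of Euclidean motions of the plane. Realize it as $\mathbb R^3$ with coordinates $(t,n_1,n_2)$ and product $$(t,n_1,n_2)\cdot(t',n_1',n_2')=(t+t',\ n_1+n_1'\cos t+n_2'\sin t,\ n_2-n_1'\sin t+n_2'\cos t).$$ This is the realization $\mathfrak t\times\mathfrak n$ with $\mathfrak n=\mathrm{span}(X_2,X_3)$ and $\mathfrak t=\mathrm{span}(X_1)$, where $[X_1,X_2]=X_3$, $[X_1,X_3]=-X_2$, $[X_2,X_3]=0$. Then $\mathcal S_\sigma(G)$ coincides, as a topological vector space, with the usual Schwartz space $\mathcal S(\mathbb R^3)$.
   Context: For a connected simply connected solvable Lie group $G$ realized as $\mathfrak t\times\mathfrak n$ (with $\mathfrak n$ the nilradical and $N=\{0\}\times\mathfrak n$), fix Euclidean norms and let $\|\cdot\|_{\mathrm{op}}$ be the operator norm on $\mathfrak g$. Fix a symmetric compact neighbourhood $U$ of the identity. Let $|g|_G=\min\{j:g\in U^j\}$ and $|n|_N=\min\{j:n\in(U\cap N)^j\}$. Define $$\sigma(g)=\max(\|\mathrm{Ad}(g)\|_{\mathrm{op}},\|\mathrm{Ad}(g^{-1})\|_{\mathrm{op}})(1+|g|_G+|n|_N)\quad\text{for } g=(t,n).$$ For a basis $X_1,\dots,X_m$ of $\mathfrak g$, let $X^\alpha\phi(g)=\partial_s^\alpha\phi(g\exp(s_1X_1)\cdots\exp(s_mX_m))|_{s=0}$. $\mathcal S_\sigma(G)$ is the space of $\phi\in C^\infty(G)$ with $\sup_g|\sigma^kX^\alpha\phi|<\infty$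 for all $k\in\mathbb N$, $\alpha\in\mathbb N^m$, with the topology of these seminorms. $\mathcal S(\mathbb R^3)$ denotes the classical Schwartz space in the coordinates $(t,n_1,n_2)$. *)

theory Defs
  imports "HOL-Analysis.Analysis"
begin

type_synonym pt = "real \<times> real \<times> real"

definition gmult :: "pt \<Rightarrow> pt \<Rightarrow> pt" where
  "gmult g h = (case g of (t, n1, n2) \<Rightarrow> case h of (t', m1, m2) \<Rightarrow>
     (t + t', n1 + m1 * cos t + m2 * sin t, n2 - m1 * sin t + m2 * cos t))"

definition ginv :: "pt \<Rightarrow> pt" where
  "ginv g = (case g of (t, n1, n2) \<Rightarrow>
     (- t, - (n1 * cos t - n2 * sin t), - (n1 * sin t + n2 * cos t)))"

definition Nsub :: "pt set" where
  "Nsub = {g. fst g = 0}"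

text \<open>Adjoint representation: derivative at the identity of conjugation by g;
  the Lie algebra is identified with R^3 (tangent space at the identity) with
  the Euclidean norm.\<close>
definition Ad :: "pt \<Rightarrow> pt \<Rightarrow> pt" where
  "Ad g = frechet_derivative (\<lambda>h. gmult (gmult g h) (ginv g)) (at 0)"

fun setpow :: "pt set \<Rightarrow> nat \<Rightarrow> pt set" where
  "setpow U 0 = {0}"
| "setpow U (Suc j) = {gmult x y | x y. x \<in> setpow U j \<and> y \<in> U}"

definition lenG :: "pt set \<Rightarrow> pt \<Rightarrow> nat" where
  "lenG U g = (LEAST j. g \<in> setpow U j)"

definition lenN :: "pt set \<Rightarrow> pt \<Rightarrow> nat" where
  "lenN U n = (LEAST j. n \<in> setpow (U \<inter> Nsub) j)"

text \<open>sigma(g) for g = (t, n); |n|_N is the length of (0, n) in N.\<close>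
definition sigma :: "pt set \<Rightarrow> pt \<Rightarrow> real" where
  "sigma U g = max (onorm (Ad g)) (onorm (Ad (ginv g))) *
     (1 + real (lenG U g) + real (lenN U (0, snd g)))"

definition ev :: "nat \<Rightarrow> pt" where
  "ev i = (if i = 0 then (1, 0, 0) else if i = 1 then (0, 1, 0) else (0, 0, 1))"

definition pd :: "nat \<Rightarrow> (pt \<Rightarrow> complex) \<Rightarrow> pt \<Rightarrow> complex" where
  "pd i f x = vector_derivative (\<lambda>h. f (x + h *\<^sub>R ev i)) (at 0)"

fun pds :: "nat list \<Rightarrow> (pt \<Rightarrow> complex) \<Rightarrow> pt \<Rightarrow> complex" where
  "pds [] f = f"
| "pds (i # is) f = pd i (pds is f)"

definition smooth :: "(pt \<Rightarrow> complex) \<Rightarrow> bool" where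
  "smooth f \<longleftrightarrow> (\<forall>is. set is \<subseteq> {0, 1, 2} \<longrightarrow>
      continuous_on UNIV (pds is f) \<and>
      (\<forall>i \<in> {0, 1, 2}. \<forall>x. (\<lambda>h. pds is f (x + h *\<^sub>R ev i)) differentiable (at 0)))"

definition pdalpha :: "nat \<times> nat \<times> nat \<Rightarrow> (pt \<Rightarrow> complex) \<Rightarrow> pt \<Rightarrow> complex" where
  "pdalpha \<alpha> f = (case \<alpha> of (a1, a2, a3) \<Rightarrow>
     (pd 0 ^^ a1) ((pd 1 ^^ a2) ((pd 2 ^^ a3) f)))"

text \<open>Basis X1, X2, X3 with [X1,X2]=X3, [X1,X3]=-X2, [X2,X3]=0:
  exp(s X1) = (s,0,0), exp(s X2) = (0,s,0), exp(s X3) = (0,0,-s).\<close>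
definition expX :: "nat \<Rightarrow> real \<Rightarrow> pt" where
  "expX i s = (if i = 0 then (s, 0, 0) else if i = 1 then (0, s, 0) else (0, 0, - s))"

definition Eprod :: "pt \<Rightarrow> pt" where
  "Eprod s = (case s of (s1, s2, s3) \<Rightarrow>
     gmult (gmult (expX 0 s1) (expX 1 s2)) (expX 2 s3))"

definition Xalpha :: "nat \<times> nat \<times> nat \<Rightarrow> (pt \<Rightarrow> complex) \<Rightarrow> pt \<Rightarrow> complex" where
  "Xalpha \<alpha> \<phi> g = pdalpha \<alpha> (\<lambda>s. \<phi> (gmult g (Eprod s))) 0"

definition Ssigma :: "pt set \<Rightarrow> (pt \<Rightarrow> complex) set" where
  "Ssigma U = {\<phi>. smooth \<phi> \<and> (\<forall>k \<alpha>.
      bdd_above (range (\<lambda>g. sigma U g ^ k * norm (Xalpha \<alpha> \<phi> g))))}"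

definition sigma_seminorms :: "pt set \<Rightarrow> ((pt \<Rightarrow> complex) \<Rightarrow> real) set" where
  "sigma_seminorms U = {(\<lambda>\<phi>. SUP g. sigma U g ^ k * norm (Xalpha \<alpha> \<phi> g)) | k \<alpha>. True}"

definition monom :: "nat \<times> nat \<times> nat \<Rightarrow> pt \<Rightarrow> real" where
  "monom \<beta> x = (case \<beta> of (b1, b2, b3) \<Rightarrow> case x of (t, n1, n2) \<Rightarrow>
     t ^ b1 * n1 ^ b2 * n2 ^ b3)"

definition Schwartz :: "(pt \<Rightarrow> complex) set" where
  "Schwartz = {f. smooth f \<and> (\<forall>\<alpha> \<beta>.
      bdd_above (range (\<lambda>x. \<bar>monom \<beta> x\<bar> * norm (pdalpha \<alpha> f x))))}"

definition schwartz_seminorms :: "((pt \<Rightarrow> complex) \<Rightarrow> real) set" where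
  "schwartz_seminorms = {(\<lambda>f. SUP x. \<bar>monom \<beta> x\<bar> * norm (pdalpha \<alpha> f x)) | \<alpha> \<beta>. True}"

definition seminorm_open :: "('a \<Rightarrow> 'b::ab_group_add) set \<Rightarrow> (('a \<Rightarrow> 'b) \<Rightarrow> real) set \<Rightarrow> ('a \<Rightarrow> 'b) set \<Rightarrow> bool" where
  "seminorm_open S P V \<longleftrightarrow> V \<subseteq> S \<and> (\<forall>f \<in> V. \<exists>F \<epsilon>. finite F \<and> F \<subseteq> P \<and> \<epsilon> > 0 \<and>
      {g \<in> S. \<forall>p \<in> F. p (\<lambda>x. g x - f x) < \<epsilon>} \<subseteq> V)"

definition seminorm_topology :: "('a \<Rightarrow> 'b::ab_group_add) set \<Rightarrow> (('a \<Rightarrow> 'b) \<Rightarrow> real) set \<Rightarrow> ('a \<Rightarrow> 'b) topology" where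
  "seminorm_topology S P = topology (seminorm_open S P)"

end

theory Submission
  imports Defs
begin

lemma gmult_eq: "gmult g h = (fst g + fst h,
   fst (snd g) + fst (snd h) * cos (fst g) + snd (snd h) * sin (fst g),
   snd (snd g) - fst (snd h) * sin (fst g) + snd (snd h) * cos (fst g))"
  by (cases g; cases h) (auto simp: gmult_def)

lemma ginv_eq: "ginv g = (- fst g, - (fst (snd g) * cos (fst g) - snd (snd g) * sin (fst g)),
    - (fst (snd g) * sin (fst g) + snd (snd g) * cos (fst g)))"
  by (cases g) (auto simp: ginv_def)

lemma ev_simps: "ev 0 = (1,0,0)" "ev 1 = (0,1,0)" "ev (Suc 0) = (0,1,0)" "ev 2 = (0,0,1)"
  by (auto simp: ev_def)

lemma expX_simps: "expX 0 s = (s,0,0)" "expX 1 s = (0,s,0)" "expX (Suc 0) s = (0,s,0)" "expX 2 s = (0,0,-s)"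
  by (auto simp: expX_def)

lemma Eprod_eq: "Eprod s = (fst s, fst (snd s) * cos (fst s) - snd (snd s) * sin (fst s),
   - fst (snd s) * sin (fst s) - snd (snd s) * cos (fst s))"
  by (cases s) (auto simp: Eprod_def gmult_eq expX_simps algebra_simps)

lemma I0: "gmult g (Eprod (s1 + h, 0, 0)) = gmult (gmult g (Eprod (s1,0,0))) (expX 0 h)"
  by (simp add: gmult_eq Eprod_eq expX_simps)

lemma I1: "gmult g (Eprod (s + h *\<^sub>R ev 1)) = gmult (gmult g (Eprod s)) (expX 1 h)"
  by (simp add: gmult_eq Eprod_eq expX_simps ev_simps sin_add cos_add algebra_simps)

lemma I2: "gmult g (Eprod (s + h *\<^sub>R ev 2)) = gmult (gmult g (Eprod s)) (expX 2 h)"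
  by (simp add: gmult_eq Eprod_eq expX_simps ev_simps sin_add cos_add algebra_simps)

lemma R0_eq: "gmult x (expX 0 h) = x + h *\<^sub>R ev 0"
  by (cases x) (simp add: gmult_eq expX_simps ev_simps)
lemma R1_eq: "gmult x (expX 1 h) = x + h *\<^sub>R (0, cos (fst x), - sin (fst x))"
  by (cases x) (simp add: gmult_eq expX_simps ev_simps)
lemma R2_eq: "gmult x (expX 2 h) = x + h *\<^sub>R (0, - sin (fst x), - cos (fst x))"
  by (cases x) (simp add: gmult_eq expX_simps ev_simps)

definition dd :: "pt \<Rightarrow> (pt \<Rightarrow> complex) \<Rightarrow> pt \<Rightarrow> complex" where
  "dd u f x = vector_derivative (\<lambda>h. f (x + h *\<^sub>R u)) (at 0)"

lemma pd_dd: "pd i = dd (ev i)"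
  by (auto simp: pd_def dd_def fun_eq_iff)

definition Rop :: "nat \<Rightarrow> (pt \<Rightarrow> complex) \<Rightarrow> pt \<Rightarrow> complex" where
  "Rop i f x = vector_derivative (\<lambda>h. f (gmult x (expX i h))) (at 0)"

lemma Eprod_0: "Eprod (0,0,0) = (0,0,0)" by (simp add: Eprod_eq)
lemma gmult_0: "gmult g (0,0,0) = g" by (simp add: gmult_eq)

lemma pd2_step: "pd 2 (\<lambda>s. G (gmult g (Eprod s))) = (\<lambda>s. Rop 2 G (gmult g (Eprod s)))"
  by (simp add: pd_def Rop_def I2 fun_eq_iff)
lemma pd1_step: "pd 1 (\<lambda>s. G (gmult g (Eprod s))) = (\<lambda>s. Rop 1 G (gmult g (Eprod s)))"
  by (simp only: pd_def Rop_def I1 fun_eq_iff) simp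

lemma L2: "(pd 2 ^^ c) (\<lambda>s. \<Psi> (gmult g (Eprod s))) = (\<lambda>s. ((Rop 2 ^^ c) \<Psi>) (gmult g (Eprod s)))"
proof (induction c)
  case (Suc c)
  show ?case
    by (simp only: funpow.simps o_apply Suc.IH pd2_step)
qed simp

lemma L1: "(pd 1 ^^ c) (\<lambda>s. \<Psi> (gmult g (Eprod s))) = (\<lambda>s. ((Rop 1 ^^ c) \<Psi>) (gmult g (Eprod s)))"
proof (induction c)
  case (Suc c)
  show ?case
    by (simp only: funpow.simps o_apply Suc.IH pd1_step)
qed simp

lemma L0: "(\<forall>s1. F (s1,0,0) = \<Psi> (gmult g (Eprod (s1,0,0)))) \<Longrightarrow>
   (pd 0 ^^ a) F (s1,0,0) = ((Rop 0 ^^ a) \<Psi>) (gmult g (Eprod (s1,0,0)))"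
proof (induction a arbitrary: s1)
  case 0
  then show ?case by simp
next
  case (Suc a)
  have e: "(s1, 0, 0) + h *\<^sub>R ev 0 = (s1 + h, 0, 0)" for h :: real
    by (simp add: ev_simps)
  have "(pd 0 ^^ Suc a) F (s1,0,0) = vector_derivative (\<lambda>h. (pd 0 ^^ a) F (s1 + h, 0, 0)) (at 0)"
    by (simp add: pd_def e)
  also have "\<dots> = vector_derivative (\<lambda>h. ((Rop 0 ^^ a) \<Psi>) (gmult (gmult g (Eprod (s1,0,0))) (expX 0 h))) (at 0)"
    using Suc by (simp add: I0)
  also have "\<dots> = Rop 0 ((Rop 0 ^^ a) \<Psi>) (gmult g (Eprod (s1,0,0)))"
    by (rule Rop_def[symmetric])
  finally show ?case by simp
qed

lemma Xalpha_R: "Xalpha (a,b,c) \<phi> = (Rop 0 ^^ a) ((Rop 1 ^^ b) ((Rop 2 ^^ c) \<phi>))"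
proof
  fix g
  have "Xalpha (a,b,c) \<phi> g = (pd 0 ^^ a) ((pd 1 ^^ b) ((pd 2 ^^ c) (\<lambda>s. \<phi> (gmult g (Eprod s))))) (0,0,0)"
    by (simp add: Xalpha_def pdalpha_def zero_prod_def)
  also have "\<dots> = ((Rop 0 ^^ a) ((Rop 1 ^^ b) ((Rop 2 ^^ c) \<phi>))) (gmult g (Eprod (0,0,0)))"
    unfolding L2 L1 by (rule L0) (rule allI, rule refl)
  finally show "Xalpha (a,b,c) \<phi> g = (Rop 0 ^^ a) ((Rop 1 ^^ b) ((Rop 2 ^^ c) \<phi>)) g"
    by (simp add: Eprod_0 gmult_0)
qed

lemma Rop0: "Rop 0 = pd 0"
  by (auto simp: fun_eq_iff Rop_def pd_def R0_eq)

lemma Rop1: "Rop 1 f x = dd (0, cos (fst x), - sin (fst x)) f x"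
  by (simp only: Rop_def dd_def R1_eq)
lemma Rop2: "Rop 2 f x = dd (0, - sin (fst x), - cos (fst x)) f x"
  by (auto simp: Rop_def dd_def R2_eq)

lemma line_deriv:
  fixes F :: "real \<Rightarrow> 'a::real_normed_vector"
  assumes "(F has_vector_derivative D) (at 0)"
  shows "((\<lambda>s. F (s - s0)) has_vector_derivative D) (at s0)"
proof -
  have a: "((\<lambda>s. s - s0) has_vector_derivative 1) (at s0)"
    by (auto intro!: derivative_eq_intros)
  have b: "(F has_vector_derivative D) (at ((\<lambda>s. s - s0) s0))" using assms by simp
  from vector_diff_chain_at[OF a b] show ?thesis by (simp add: o_def)
qed

lemma dd_shift:
  fixes f :: "pt \<Rightarrow> complex"
  assumes "(\<lambda>h. f ((x + s0 *\<^sub>R u) + h *\<^sub>R u)) differentiable (at 0)"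
  shows "((\<lambda>s. f (x + s *\<^sub>R u)) has_vector_derivative dd u f (x + s0 *\<^sub>R u)) (at s0)"
proof -
  have "((\<lambda>h. f ((x + s0 *\<^sub>R u) + h *\<^sub>R u)) has_vector_derivative dd u f (x + s0 *\<^sub>R u)) (at 0)"
    using assms by (simp add: dd_def vector_derivative_works)
  from line_deriv[OF this, of s0] show ?thesis
    by (simp add: algebra_simps)
qed

lemma mvi:
  fixes g :: "real \<Rightarrow> complex"
  assumes h: "0 \<le> h" and d: "\<And>s. s \<in> {0..h} \<Longrightarrow> (g has_vector_derivative g' s) (at s)"
    and b: "\<And>s. s \<in> {0..h} \<Longrightarrow> norm (g' s - c) \<le> M"
  shows "norm (g h - g 0 - h *\<^sub>R c) \<le> h * M"
proof -
  define f where "f s = g s - s *\<^sub>R c" for s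
  have df: "(f has_derivative (\<lambda>d. d *\<^sub>R (g' s - c))) (at s within {0..h})" if "s \<in> {0..h}" for s
  proof -
    have "(f has_vector_derivative (g' s - c)) (at s)"
      unfolding f_def using d[OF that] by (auto intro!: derivative_eq_intros)
    then show ?thesis
      by (simp add: has_vector_derivative_def has_derivative_at_withinI)
  qed
  have on: "onorm (\<lambda>d. d *\<^sub>R (g' s - c)) \<le> M" if "s \<in> {0..h}" for s
  proof (rule onorm_le)
    fix x :: real
    have "\<bar>x\<bar> * cmod (g' s - c) \<le> \<bar>x\<bar> * M" by (rule mult_left_mono[OF b[OF that]]) simp
    then show "norm (x *\<^sub>R (g' s - c)) \<le> M * norm x" by (simp add: mult.commute)
  qed
  have "norm (f h - f 0) \<le> M * norm (h - 0)"
    by (rule differentiable_bound[OF convex_real_interval(5) df on]) (use h in auto)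
  then show ?thesis using h by (simp add: f_def mult.commute algebra_simps)
qed

lemma rect_est:
  fixes f :: "pt \<Rightarrow> complex"
  assumes d1: "\<forall>y. (\<lambda>h. f (y + h *\<^sub>R u)) differentiable (at 0)"
    and d3: "\<forall>y. (\<lambda>h. dd u f (y + h *\<^sub>R v)) differentiable (at 0)"
    and h: "0 \<le> h"
    and b: "\<forall>s\<in>{0..h}. \<forall>r\<in>{0..h}. norm (dd v (dd u f) (x + s *\<^sub>R u + r *\<^sub>R v) - A) \<le> e"
  shows "norm ((f (x + h *\<^sub>R v + h *\<^sub>R u) - f (x + h *\<^sub>R u)) - (f (x + h *\<^sub>R v) - f x) - (h * h) *\<^sub>R A) \<le> h * (h * e)"
proof -
  define g where "g s = f ((x + h *\<^sub>R v) + s *\<^sub>R u) - f (x + s *\<^sub>R u)" for s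
  define g' where "g' s = dd u f ((x + h *\<^sub>R v) + s *\<^sub>R u) - dd u f (x + s *\<^sub>R u)" for s
  have gd: "(g has_vector_derivative g' s) (at s)" for s
    unfolding g_def g'_def
    by (intro has_vector_derivative_diff dd_shift) (rule d1[rule_format])+
  have gb: "norm (g' s - h *\<^sub>R A) \<le> h * e" if s: "s \<in> {0..h}" for s
  proof -
    define k where "k r = dd u f ((x + s *\<^sub>R u) + r *\<^sub>R v)" for r
    have kd: "(k has_vector_derivative dd v (dd u f) ((x + s *\<^sub>R u) + r *\<^sub>R v)) (at r)" for r
      unfolding k_def by (rule dd_shift) (rule d3[rule_format])
    have "norm (k h - k 0 - h *\<^sub>R A) \<le> h * e"
      by (rule mvi[OF h kd]) (use b s in auto)
    moreover have "k h - k 0 = g' s"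
      by (simp add: k_def g'_def algebra_simps)
    ultimately show ?thesis by simp
  qed
  have "norm (g h - g 0 - h *\<^sub>R (h *\<^sub>R A)) \<le> h * (h * e)"
    by (rule mvi[OF h gd gb])
  then show ?thesis by (simp add: g_def algebra_simps)
qed

lemma clairaut:
  fixes f :: "pt \<Rightarrow> complex"
  assumes d1: "\<forall>y. (\<lambda>h. f (y + h *\<^sub>R u)) differentiable (at 0)"
    and d2: "\<forall>y. (\<lambda>h. f (y + h *\<^sub>R v)) differentiable (at 0)"
    and d3: "\<forall>y. (\<lambda>h. dd u f (y + h *\<^sub>R v)) differentiable (at 0)"
    and d4: "\<forall>y. (\<lambda>h. dd v f (y + h *\<^sub>R u)) differentiable (at 0)"
    and c1: "isCont (dd v (dd u f)) x"
    and c2: "isCont (dd u (dd v f)) x"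
  shows "dd v (dd u f) x = dd u (dd v f) x"
proof (rule ccontr)
  define A where "A = dd v (dd u f) x"
  define B where "B = dd u (dd v f) x"
  assume "dd v (dd u f) x \<noteq> dd u (dd v f) x"
  then have AB: "norm (A - B) > 0" by (simp add: A_def B_def)
  define e where "e = norm (A - B) / 4"
  have e: "e > 0" using AB by (simp add: e_def)
  obtain d1' where d1': "d1' > 0" "\<And>y. dist y x < d1' \<Longrightarrow> dist (dd v (dd u f) y) A < e"
    using c1 e unfolding continuous_at_eps_delta A_def by blast
  obtain d2' where d2': "d2' > 0" "\<And>y. dist y x < d2' \<Longrightarrow> dist (dd u (dd v f) y) B < e"
    using c2 e unfolding continuous_at_eps_delta B_def by blast
  define \<delta> where "\<delta> = min d1' d2'"
  have \<delta>: "\<delta> > 0" using d1' d2' by (simp add: \<delta>_def)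
  define h where "h = \<delta> / (2 * (1 + norm u + norm v))"
  have h: "h > 0" using \<delta> unfolding h_def by (smt (verit) norm_ge_zero divide_pos_pos)
  have near: "dist (x + s *\<^sub>R a + r *\<^sub>R b) x < \<delta>"
    if "s \<in> {0..h}" "r \<in> {0..h}" "(a = u \<and> b = v) \<or> (a = v \<and> b = u)" for s r a b
  proof -
    have "dist (x + s *\<^sub>R a + r *\<^sub>R b) x = norm (s *\<^sub>R a + r *\<^sub>R b)"
      by (simp add: dist_norm)
    also have "\<dots> \<le> s * norm a + r * norm b"
      using that by (auto intro!: order.trans[OF norm_triangle_ineq] simp: abs_of_nonneg)
    also have "\<dots> \<le> h * norm a + h * norm b"
      using that by (auto intro!: add_mono mult_right_mono)
    also have "\<dots> = h * (norm u + norm v)" using that(3) by (auto simp: algebra_simps)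
    also have "\<dots> < \<delta>"
    proof -
      have "h * (norm u + norm v) = \<delta> * ((norm u + norm v) / (2 * (1 + norm u + norm v)))"
        by (simp add: h_def)
      also have "\<dots> < \<delta> * 1"
        proof (rule mult_strict_left_mono[OF _ \<delta>])
        have "0 < 2 * (1 + norm u + norm v)" by (smt (verit) norm_ge_zero)
        then show "(norm u + norm v) / (2 * (1 + norm u + norm v)) < 1"
          by (simp add: divide_less_eq)
      qed
      finally show ?thesis by simp
    qed
    finally show ?thesis .
  qed
  have b1: "\<forall>s\<in>{0..h}. \<forall>r\<in>{0..h}. norm (dd v (dd u f) (x + s *\<^sub>R u + r *\<^sub>R v) - A) \<le> e"
  proof (intro ballI)
    fix s r assume s: "s \<in> {0..h}" and r: "r \<in> {0..h}"
    have "dist (x + s *\<^sub>R u + r *\<^sub>R v) x < \<delta>" by (rule near[OF s r]) simp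
    then have "dist (x + s *\<^sub>R u + r *\<^sub>R v) x < d1'" by (simp add: \<delta>_def)
    from d1'(2)[OF this] show "norm (dd v (dd u f) (x + s *\<^sub>R u + r *\<^sub>R v) - A) \<le> e"
      by (simp add: dist_norm)
  qed
  have b2: "\<forall>s\<in>{0..h}. \<forall>r\<in>{0..h}. norm (dd u (dd v f) (x + s *\<^sub>R v + r *\<^sub>R u) - B) \<le> e"
  proof (intro ballI)
    fix s r assume s: "s \<in> {0..h}" and r: "r \<in> {0..h}"
    have "dist (x + s *\<^sub>R v + r *\<^sub>R u) x < \<delta>" by (rule near[OF s r]) simp
    then have "dist (x + s *\<^sub>R v + r *\<^sub>R u) x < d2'" by (simp add: \<delta>_def)
    from d2'(2)[OF this] show "norm (dd u (dd v f) (x + s *\<^sub>R v + r *\<^sub>R u) - B) \<le> e"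
      by (simp add: dist_norm)
  qed
  note E1 = rect_est[OF d1 d3 less_imp_le[OF h] b1]
  note E2 = rect_est[OF d2 d4 less_imp_le[OF h] b2]
  define D where "D = (f (x + h *\<^sub>R v + h *\<^sub>R u) - f (x + h *\<^sub>R u)) - (f (x + h *\<^sub>R v) - f x)"
  have E1': "norm (D - (h * h) *\<^sub>R A) \<le> h * (h * e)" using E1 by (simp add: D_def)
  have E2': "norm (D - (h * h) *\<^sub>R B) \<le> h * (h * e)" using E2 by (simp add: D_def algebra_simps)
  have "norm ((h * h) *\<^sub>R (A - B)) \<le> norm (D - (h * h) *\<^sub>R B) + norm (D - (h * h) *\<^sub>R A)"
    by (rule order.trans[OF _ norm_triangle_ineq4]) (simp add: algebra_simps)
  also have "\<dots> \<le> 2 * (h * (h * e))" using E1' E2' by simp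
  finally have "(h * h) * norm (A - B) \<le> 2 * (h * (h * e))" by simp
  then have "(h * h) * norm (A - B) \<le> (h * h) * (norm (A - B) / 2)" by (simp add: e_def)
  then have "norm (A - B) \<le> norm (A - B) / 2"
    using h by (simp add: mult_le_cancel_left_pos)
  then show False using AB by simp
qed

lemma dir_deriv:
  fixes f :: "pt \<Rightarrow> complex"
  assumes d1: "\<forall>y. (\<lambda>h. f (y + h *\<^sub>R ev 1)) differentiable (at 0)"
    and d2: "\<forall>y. (\<lambda>h. f (y + h *\<^sub>R ev 2)) differentiable (at 0)"
    and c: "continuous_on UNIV (pd 2 f)"
  shows "((\<lambda>h. f (x + h *\<^sub>R (0,a,b))) has_vector_derivative (a *\<^sub>R pd 1 f x + b *\<^sub>R pd 2 f x)) (at 0)"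
proof -
  obtain t n1 n2 where x: "x = (t,n1,n2)" by (cases x)
  define F where "F p q = f (t,p,q)" for p q
  have fx: "((\<lambda>p. F p n2) has_derivative (\<lambda>d. d *\<^sub>R pd 1 f x)) (at n1 within UNIV)"
  proof -
    have "((\<lambda>s. f ((t,0,n2) + s *\<^sub>R ev 1)) has_vector_derivative dd (ev 1) f ((t,0,n2) + n1 *\<^sub>R ev 1)) (at n1)"
      by (rule dd_shift) (rule d1[rule_format])
    then show ?thesis by (simp add: F_def ev_simps has_vector_derivative_def x pd_dd)
  qed
  have fy: "((\<lambda>q'. F p q') has_derivative blinfun_apply (blinfun_scaleR_left (pd 2 f (t,p,q)))) (at q within UNIV)"
    if "p \<in> UNIV" "q \<in> UNIV" for p q
  proof -
    have "((\<lambda>s. f ((t,p,0) + s *\<^sub>R ev 2)) has_vector_derivative dd (ev 2) f ((t,p,0) + q *\<^sub>R ev 2)) (at q)"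
      by (rule dd_shift) (rule d2[rule_format])
    then show ?thesis by (simp add: F_def ev_simps has_vector_derivative_def pd_dd)
  qed
  have cont: "continuous (at (n1,n2) within UNIV \<times> UNIV) (\<lambda>(p,q). blinfun_scaleR_left (pd 2 f (t,p,q)))"
  proof -
    have c1: "continuous_on UNIV (\<lambda>(p::real,q::real). (t,p,q))"
      by (auto intro!: continuous_intros simp: split_beta)
    have c2: "continuous_on UNIV (\<lambda>(p::real,q::real). pd 2 f (t,p,q))"
      using continuous_on_compose[OF c1 continuous_on_subset[OF c]] by (simp add: o_def split_beta)
    have "continuous_on UNIV (\<lambda>(p::real,q::real). blinfun_scaleR_left (pd 2 f (t,p,q)))"
      using continuous_on_compose[OF c2 bounded_linear.continuous_on[OF bounded_linear_blinfun_scaleR_left continuous_on_id]]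
      by (simp add: o_def split_beta)
    moreover have "(\<lambda>(p::real,q::real). blinfun_scaleR_left (pd 2 f (t,p,q))) = (\<lambda>z. blinfun_scaleR_left (pd 2 f (t,z)))"
      by (auto simp: fun_eq_iff)
    ultimately show ?thesis by (simp add: continuous_on_eq_continuous_at)
  qed
  note H = has_derivative_partialsI[OF fx fy cont]
  define L where "L = (\<lambda>(tx::real, ty::real). tx *\<^sub>R pd 1 f x + blinfun_apply (blinfun_scaleR_left (pd 2 f (t,n1,n2))) ty)"
  have H': "((\<lambda>(p,q). F p q) has_derivative L) (at ((\<lambda>h::real. (n1 + h * a, n2 + h * b)) 0))"
    using H by (simp add: L_def)
  have P: "((\<lambda>h::real. (n1 + h * a, n2 + h * b)) has_derivative (\<lambda>h. (h*a, h*b))) (at 0)"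
    by (auto intro!: derivative_eq_intros)
  note C = diff_chain_at[OF P H']
  have e1: "((\<lambda>(p,q). F p q) \<circ> (\<lambda>h::real. (n1 + h * a, n2 + h * b))) = (\<lambda>h. f (x + h *\<^sub>R (0,a,b)))"
    by (auto simp: fun_eq_iff x F_def algebra_simps)
  have e2: "L \<circ> (\<lambda>h. (h*a, h*b)) = (\<lambda>h. h *\<^sub>R (a *\<^sub>R pd 1 f x + b *\<^sub>R pd 2 f x))"
    by (auto simp: fun_eq_iff x L_def algebra_simps)
  show ?thesis using C unfolding e1 e2 has_vector_derivative_def .
qed

definition trig :: "real \<Rightarrow> real \<Rightarrow> real \<Rightarrow> real" where
  "trig a b t = a * cos t + b * sin t"

lemma trig_bound: "\<bar>trig a b t\<bar> \<le> \<bar>a\<bar> + \<bar>b\<bar>"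
proof -
  have "\<bar>a * cos t\<bar> \<le> \<bar>a\<bar>" using abs_cos_le_one[of t]
    by (simp add: abs_mult mult_left_le)
  moreover have "\<bar>b * sin t\<bar> \<le> \<bar>b\<bar>" using abs_sin_le_one[of t]
    by (simp add: abs_mult mult_left_le)
  ultimately show ?thesis unfolding trig_def by linarith
qed

lemma trig_deriv: "((\<lambda>h. trig a b (t + h)) has_real_derivative trig b (-a) t) (at 0)"
  unfolding trig_def by (auto intro!: derivative_eq_intros)

lemma fst_ev: "fst (ev 0) = 1" "i \<noteq> 0 \<Longrightarrow> fst (ev i) = 0"
  by (auto simp: ev_def)

lemma pd_has: "(\<lambda>h. F (x + h *\<^sub>R ev i)) differentiable (at 0) \<Longrightarrow>
   ((\<lambda>h. F (x + h *\<^sub>R ev i)) has_vector_derivative pd i F x) (at 0)"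
  by (simp add: pd_def vector_derivative_works)

lemma pd_add:
  assumes "(\<lambda>h. F (x + h *\<^sub>R ev i)) differentiable (at 0)" "(\<lambda>h. G (x + h *\<^sub>R ev i)) differentiable (at 0)"
  shows "pd i (\<lambda>y. F y + G y) x = pd i F x + pd i G x"
  unfolding pd_def[of i "\<lambda>y. F y + G y"]
  by (rule vector_derivative_at, rule has_vector_derivative_add[OF pd_has[OF assms(1)] pd_has[OF assms(2)]])

lemma pd_diff:
  assumes "(\<lambda>h. F (x + h *\<^sub>R ev i)) differentiable (at 0)" "(\<lambda>h. G (x + h *\<^sub>R ev i)) differentiable (at 0)"
  shows "pd i (\<lambda>y. F y - G y) x = pd i F x - pd i G x"
  unfolding pd_def[of i "\<lambda>y. F y - G y"]
  by (rule vector_derivative_at, rule has_vector_derivative_diff[OF pd_has[OF assms(1)] pd_has[OF assms(2)]])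

lemma trig_line_deriv:
  "((\<lambda>h. trig a b (fst (x + h *\<^sub>R ev i))) has_real_derivative (fst (ev i) * trig b (-a) (fst x))) (at 0)"
proof (cases "i = 0")
  case True
  then show ?thesis using trig_deriv[of a b "fst x"] by (simp add: fst_ev)
next
  case False
  then show ?thesis by (simp add: fst_ev)
qed

lemma pd_scl:
  assumes "(\<lambda>h. F (x + h *\<^sub>R ev i)) differentiable (at 0)"
  shows "pd i (\<lambda>y. trig a b (fst y) *\<^sub>R F y) x =
     (fst (ev i) * trig b (-a) (fst x)) *\<^sub>R F x + trig a b (fst x) *\<^sub>R pd i F x"
proof -
  have "((\<lambda>h. trig a b (fst (x + h *\<^sub>R ev i)) *\<^sub>R F (x + h *\<^sub>R ev i)) has_vector_derivative
     (trig a b (fst (x + 0 *\<^sub>R ev i)) *\<^sub>R pd i F x + (fst (ev i) * trig b (-a) (fst x)) *\<^sub>R F (x + 0 *\<^sub>R ev i))) (at 0)"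
    by (rule has_vector_derivative_scaleR[OF trig_line_deriv pd_has[OF assms]])
  then show ?thesis unfolding pd_def[of i "\<lambda>y. trig a b (fst y) *\<^sub>R F y"]
    by (intro vector_derivative_at) (simp add: add.commute)
qed

lemma scl_diff:
  fixes F :: "pt \<Rightarrow> complex"
  assumes "(\<lambda>h. F (x + h *\<^sub>R ev i)) differentiable (at 0)"
  shows "(\<lambda>h. trig a b (fst (x + h *\<^sub>R ev i)) *\<^sub>R F (x + h *\<^sub>R ev i)) differentiable (at 0)"
  using has_vector_derivative_scaleR[OF trig_line_deriv pd_has[OF assms]]
  unfolding has_vector_derivative_def differentiable_def by blast

lemma smooth_pds: "smooth \<phi> \<Longrightarrow> set is \<subseteq> {0,1,2} \<Longrightarrow>
   continuous_on UNIV (pds is \<phi>) \<and> (\<forall>i\<in>{0,1,2}. \<forall>x. (\<lambda>h. pds is \<phi> (x + h *\<^sub>R ev i)) differentiable (at 0))"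
  unfolding smooth_def by blast

inductive_set OpB :: "((pt \<Rightarrow> complex) \<Rightarrow> pt \<Rightarrow> complex) set \<Rightarrow> ((pt \<Rightarrow> complex) \<Rightarrow> pt \<Rightarrow> complex) set"
  for Bs where
  base: "A \<in> Bs \<Longrightarrow> A \<in> OpB Bs"
| add: "A \<in> OpB Bs \<Longrightarrow> B \<in> OpB Bs \<Longrightarrow> (\<lambda>\<phi> x. A \<phi> x + B \<phi> x) \<in> OpB Bs"
| scl: "A \<in> OpB Bs \<Longrightarrow> (\<lambda>\<phi> x. trig a b (fst x) *\<^sub>R A \<phi> x) \<in> OpB Bs"

definition Bpds :: "((pt \<Rightarrow> complex) \<Rightarrow> pt \<Rightarrow> complex) set" where
  "Bpds = {(\<lambda>\<phi>. pds w \<phi>) | w. set w \<subseteq> {0,1,2}}"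

abbreviation "Op \<equiv> OpB Bpds"

lemma Bpds_I: "set w \<subseteq> {0,1,2} \<Longrightarrow> pds w \<in> Bpds"
  unfolding Bpds_def by blast

lemma Op_reg: "A \<in> Op \<Longrightarrow> smooth \<phi> \<Longrightarrow>
   continuous_on UNIV (A \<phi>) \<and> (\<forall>i\<in>{0,1,2}. \<forall>x. (\<lambda>h. A \<phi> (x + h *\<^sub>R ev i)) differentiable (at 0))"
proof (induction A rule: OpB.induct)
  case (base A)
  then show ?case using smooth_pds[of \<phi>] by (auto simp: Bpds_def)
next
  case (add A B)
  then show ?case by (auto intro!: continuous_on_add differentiable_add)
next
  case (scl A a b)
  have c: "continuous_on UNIV (\<lambda>x::pt. trig a b (fst x))"
    unfolding trig_def by (auto intro!: continuous_intros)
  from scl have ih: "continuous_on UNIV (A \<phi>)" "\<And>i x. i\<in>{0,1,2} \<Longrightarrow> (\<lambda>h. A \<phi> (x + h *\<^sub>R ev i)) differentiable (at 0)"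
    by auto
  show ?case
  proof (intro conjI ballI allI)
    show "continuous_on UNIV (\<lambda>x. trig a b (fst x) *\<^sub>R A \<phi> x)"
      by (intro continuous_on_scaleR c ih(1))
    fix i x assume "i \<in> {0::nat,1,2}"
    show "(\<lambda>h. trig a b (fst (x + h *\<^sub>R ev i)) *\<^sub>R A \<phi> (x + h *\<^sub>R ev i)) differentiable (at 0)"
      by (rule scl_diff, rule ih(2)) fact
  qed
qed

lemma Op_pd: "A \<in> Op \<Longrightarrow> i \<in> {0,1,2} \<Longrightarrow> \<exists>A'\<in>Op. \<forall>\<phi>. smooth \<phi> \<longrightarrow> pd i (A \<phi>) = A' \<phi>"
proof (induction A rule: OpB.induct)
  case (base A)
  then obtain w where w: "A = (\<lambda>\<phi>. pds w \<phi>)" "set w \<subseteq> {0,1,2}" by (auto simp: Bpds_def)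
  have "(\<lambda>\<phi>. pds (i # w) \<phi>) \<in> Bpds" using w base.prems by (intro Bpds_I) auto
  then have m: "(\<lambda>\<phi>. pds (i # w) \<phi>) \<in> Op" by (rule OpB.base)
  have "\<forall>\<phi>. smooth \<phi> \<longrightarrow> pd i (A \<phi>) = pds (i # w) \<phi>" using w by simp
  with m show ?case by (intro bexI[of _ "\<lambda>\<phi>. pds (i # w) \<phi>"])
next
  case (add A B)
  obtain A' where A': "A' \<in> Op" "\<And>\<phi>. smooth \<phi> \<Longrightarrow> pd i (A \<phi>) = A' \<phi>" using add by blast
  obtain B' where B': "B' \<in> Op" "\<And>\<phi>. smooth \<phi> \<Longrightarrow> pd i (B \<phi>) = B' \<phi>" using add by blast
  have m: "(\<lambda>\<phi> x. A' \<phi> x + B' \<phi> x) \<in> Op" using A'(1) B'(1) by (rule OpB.add)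
  have "pd i (\<lambda>x. A \<phi> x + B \<phi> x) x = A' \<phi> x + B' \<phi> x" if s: "smooth \<phi>" for \<phi> x
  proof -
    have dA: "(\<lambda>h. A \<phi> (x + h *\<^sub>R ev i)) differentiable (at 0)"
      using Op_reg[OF add.hyps(1) s] add.prems by blast
    have dB: "(\<lambda>h. B \<phi> (x + h *\<^sub>R ev i)) differentiable (at 0)"
      using Op_reg[OF add.hyps(2) s] add.prems by blast
    show ?thesis by (simp only: pd_add[OF dA dB] A'(2)[OF s] B'(2)[OF s])
  qed
  then have "\<forall>\<phi>. smooth \<phi> \<longrightarrow> pd i (\<lambda>x. A \<phi> x + B \<phi> x) = (\<lambda>x. A' \<phi> x + B' \<phi> x)"
    by (intro allI impI ext)
  with m show ?case by (intro bexI[of _ "\<lambda>\<phi> x. A' \<phi> x + B' \<phi> x"])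
next
  case (scl A a b)
  obtain A' where A': "A' \<in> Op" "\<And>\<phi>. smooth \<phi> \<Longrightarrow> pd i (A \<phi>) = A' \<phi>" using scl by blast
  define C where "C = (\<lambda>\<phi> x. trig (fst (ev i) * b) (fst (ev i) * (-a)) (fst x) *\<^sub>R A \<phi> x + trig a b (fst x) *\<^sub>R A' \<phi> x)"
  have m: "C \<in> Op" unfolding C_def by (intro OpB.add OpB.scl scl.hyps A'(1))
  have "pd i (\<lambda>x. trig a b (fst x) *\<^sub>R A \<phi> x) x = C \<phi> x" if s: "smooth \<phi>" for \<phi> x
  proof -
    have t: "fst (ev i) * trig b (-a) (fst x) = trig (fst (ev i) * b) (fst (ev i) * (-a)) (fst x)"
      by (simp add: trig_def algebra_simps)
    have dA: "(\<lambda>h. A \<phi> (x + h *\<^sub>R ev i)) differentiable (at 0)"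
      using Op_reg[OF scl.hyps(1) s] scl.prems by blast
    show ?thesis unfolding C_def by (simp only: pd_scl[OF dA] A'(2)[OF s] t)
  qed
  then have "\<forall>\<phi>. smooth \<phi> \<longrightarrow> pd i (\<lambda>x. trig a b (fst x) *\<^sub>R A \<phi> x) = C \<phi>"
    by (intro allI impI ext)
  with m show ?case by (intro bexI[of _ C])
qed

lemma Op_pds: "A \<in> Op \<Longrightarrow> set w \<subseteq> {0,1,2} \<Longrightarrow> \<exists>A'\<in>Op. \<forall>\<phi>. smooth \<phi> \<longrightarrow> pds w (A \<phi>) = A' \<phi>"
proof (induction w)
  case Nil
  then show ?case by (intro bexI[of _ A]) auto
next
  case (Cons i w)
  then obtain A' where A': "A' \<in> Op" "\<forall>\<phi>. smooth \<phi> \<longrightarrow> pds w (A \<phi>) = A' \<phi>" by auto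
  obtain A'' where A'': "A'' \<in> Op" "\<forall>\<phi>. smooth \<phi> \<longrightarrow> pd i (A' \<phi>) = A'' \<phi>"
    using Op_pd[OF A'(1), of i] Cons.prems by auto
  show ?case using A' A'' by (intro bexI[of _ A'']) auto
qed

lemma Op_smooth: "A \<in> Op \<Longrightarrow> smooth \<phi> \<Longrightarrow> smooth (A \<phi>)"
  unfolding smooth_def[of "A \<phi>"]
proof (intro allI impI)
  fix w :: "nat list" assume s: "smooth \<phi>" and A: "A \<in> Op" and w: "set w \<subseteq> {0,1,2}"
  obtain A' where A': "A' \<in> Op" "\<forall>\<phi>. smooth \<phi> \<longrightarrow> pds w (A \<phi>) = A' \<phi>"
    using Op_pds[OF A w] by blast
  show "continuous_on UNIV (pds w (A \<phi>)) \<and>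
         (\<forall>i\<in>{0, 1, 2}. \<forall>x. (\<lambda>h. pds w (A \<phi>) (x + h *\<^sub>R ev i)) differentiable at 0)"
    using Op_reg[OF A'(1) s] A'(2) s by simp
qed

lemma pds_append: "pds (u @ v) f = pds u (pds v f)"
  by (induction u) auto

lemma pds_smooth: "smooth \<phi> \<Longrightarrow> set v \<subseteq> {0,1,2} \<Longrightarrow> smooth (pds v \<phi>)"
  using Op_smooth[OF OpB.base[OF Bpds_I]] by blast

lemma pd_smooth: "smooth \<phi> \<Longrightarrow> i \<in> {0,1,2} \<Longrightarrow> smooth (pd i \<phi>)"
  using pds_smooth[of \<phi> "[i]"] by simp

lemma swap:
  assumes s: "smooth f" and i: "i \<in> {0,1,2}" and j: "j \<in> {0,1,2}"
  shows "pd i (pd j f) = pd j (pd i f)"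
proof
  fix x
  have S: "continuous_on UNIV (pds w f) \<and> (\<forall>k\<in>{0,1,2}. \<forall>y. (\<lambda>h. pds w f (y + h *\<^sub>R ev k)) differentiable at 0)"
    if "set w \<subseteq> {0,1,2}" for w
    using s that unfolding smooth_def by blast
  have S': "(\<lambda>h. pds w f (y + h *\<^sub>R ev k)) differentiable (at 0)"
    if "set w \<subseteq> {0,1,2}" "k \<in> {0,1,2}" for w k y
    using S[OF that(1)] that(2) by blast
  have d1: "\<forall>y. (\<lambda>h. f (y + h *\<^sub>R ev j)) differentiable (at 0)"
  proof
    fix y show "(\<lambda>h. f (y + h *\<^sub>R ev j)) differentiable (at 0)" using S'[of "[]" j y] j by simp
  qed
  have d2: "\<forall>y. (\<lambda>h. f (y + h *\<^sub>R ev i)) differentiable (at 0)"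
  proof
    fix y show "(\<lambda>h. f (y + h *\<^sub>R ev i)) differentiable (at 0)" using S'[of "[]" i y] i by simp
  qed
  have d3: "\<forall>y. (\<lambda>h. dd (ev j) f (y + h *\<^sub>R ev i)) differentiable (at 0)"
  proof
    fix y show "(\<lambda>h. dd (ev j) f (y + h *\<^sub>R ev i)) differentiable (at 0)"
      using S'[of "[j]" i y] i j by (simp add: pd_dd)
  qed
  have d4: "\<forall>y. (\<lambda>h. dd (ev i) f (y + h *\<^sub>R ev j)) differentiable (at 0)"
  proof
    fix y show "(\<lambda>h. dd (ev i) f (y + h *\<^sub>R ev j)) differentiable (at 0)"
      using S'[of "[i]" j y] i j by (simp add: pd_dd)
  qed
  have c1: "isCont (dd (ev i) (dd (ev j) f)) x"
  proof -
    have "continuous_on UNIV (pds [i,j] f)" using S[of "[i,j]"] i j by simp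
    then have "isCont (pds [i,j] f) x" by (metis UNIV_I continuous_on_eq_continuous_at open_UNIV)
    then show ?thesis by (simp add: pd_dd)
  qed
  have c2: "isCont (dd (ev j) (dd (ev i) f)) x"
  proof -
    have "continuous_on UNIV (pds [j,i] f)" using S[of "[j,i]"] i j by simp
    then have "isCont (pds [j,i] f) x" by (metis UNIV_I continuous_on_eq_continuous_at open_UNIV)
    then show ?thesis by (simp add: pd_dd)
  qed
  show "pd i (pd j f) x = pd j (pd i f) x"
    unfolding pd_dd by (rule clairaut[OF d1 d2 d3 d4 c1 c2])
qed

lemma pds_replicate: "pds (replicate n i) f = (pd i ^^ n) f"
  by (induction n) auto

lemma swap_pow:
  assumes s: "smooth f" and i: "i \<in> {0,1,2}" and j: "j \<in> {0,1,2}"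
  shows "pd i ((pd j ^^ n) f) = (pd j ^^ n) (pd i f)"
proof (induction n)
  case (Suc n)
  have r: "set (replicate n j) \<subseteq> {0,1,2}" using j by (induction n) auto
  have sm: "smooth ((pd j ^^ n) f)" using pds_smooth[OF s r]
    by (simp add: pds_replicate)
  have "pd i ((pd j ^^ Suc n) f) = pd j (pd i ((pd j ^^ n) f))"
    using swap[OF sm i j] by simp
  then show ?case using Suc by simp
qed simp

fun cnt :: "nat list \<Rightarrow> nat \<times> nat \<times> nat" where
  "cnt [] = (0,0,0)"
| "cnt (i # w) = (case cnt w of (a,b,c) \<Rightarrow>
     (if i = 0 then (Suc a,b,c) else if i = 1 then (a, Suc b, c) else (a, b, Suc c)))"

lemma pdalpha_pds: "pdalpha (a,b,c) f = pds (replicate a 0 @ replicate b 1 @ replicate c 2) f"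
  by (simp add: pdalpha_def pds_append pds_replicate)

lemma pds_canon: "smooth \<phi> \<Longrightarrow> set w \<subseteq> {0,1,2} \<Longrightarrow> pds w \<phi> = pdalpha (cnt w) \<phi>"
proof (induction w)
  case Nil
  then show ?case by (simp add: pdalpha_def)
next
  case (Cons i w)
  obtain a b c where abc: "cnt w = (a,b,c)" by (cases "cnt w")
  have IH: "pds w \<phi> = (pd 0 ^^ a) ((pd 1 ^^ b) ((pd 2 ^^ c) \<phi>))"
    using Cons abc by (simp add: pdalpha_def)
  have i: "i \<in> {0,1,2}" using Cons.prems by auto
  have r1: "set (replicate b (1::nat) @ replicate c 2) \<subseteq> {0,1,2}" by (auto simp: set_replicate_conv_if)
  have r2: "set (replicate c (2::nat)) \<subseteq> {0,1,2}" by (induction c) auto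
  have s1: "smooth ((pd 1 ^^ b) ((pd 2 ^^ c) \<phi>))"
    using pds_smooth[OF Cons.prems(1) r1] by (simp add: pds_append pds_replicate)
  have s2: "smooth ((pd 2 ^^ c) \<phi>)"
    using pds_smooth[OF Cons.prems(1) r2] by (simp add: pds_replicate)
  have "pds (i # w) \<phi> = pd i ((pd 0 ^^ a) ((pd 1 ^^ b) ((pd 2 ^^ c) \<phi>)))" using IH by simp
  also have "\<dots> = pdalpha (cnt (i # w)) \<phi>"
  proof -
    consider "i = 0" | "i = 1" | "i = 2" using i by auto
    then show ?thesis
    proof cases
      case 1
      then show ?thesis using abc by (simp add: pdalpha_def)
    next
      case 2
      then show ?thesis using abc swap_pow[OF s1, of 1 0 a]
        by (simp add: pdalpha_def)
    next
      case 3
      have "pd 2 ((pd 0 ^^ a) ((pd 1 ^^ b) ((pd 2 ^^ c) \<phi>))) = (pd 0 ^^ a) (pd 2 ((pd 1 ^^ b) ((pd 2 ^^ c) \<phi>)))"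
        using swap_pow[OF s1, of 2 0 a] by simp
      also have "\<dots> = (pd 0 ^^ a) ((pd 1 ^^ b) (pd 2 ((pd 2 ^^ c) \<phi>)))"
        using swap_pow[OF s2, of 2 1 b] by simp
      finally show ?thesis using 3 abc by (simp add: pdalpha_def)
    qed
  qed
  finally show ?case .
qed

lemma OpB_bound:
  assumes "A \<in> OpB Bs"
    and "\<And>B. B \<in> Bs \<Longrightarrow> \<exists>L C. C \<ge> 0 \<and> (\<forall>\<phi>. P \<phi> \<longrightarrow> (\<forall>x. norm (B \<phi> x) \<le> C * (\<Sum>\<beta>\<leftarrow>L. norm (T \<beta> \<phi> x))))"
  shows "\<exists>L C. C \<ge> 0 \<and> (\<forall>\<phi>. P \<phi> \<longrightarrow> (\<forall>x. norm (A \<phi> x) \<le> C * (\<Sum>\<beta>\<leftarrow>L. norm (T \<beta> \<phi> x))))"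
  using assms(1)
proof (induction A rule: OpB.induct)
  case (base A)
  then show ?case using assms(2) by blast
next
  case (add A B)
  obtain L1 C1 where 1: "C1 \<ge> 0" "\<And>\<phi> x. P \<phi> \<Longrightarrow> norm (A \<phi> x) \<le> C1 * (\<Sum>\<beta>\<leftarrow>L1. norm (T \<beta> \<phi> x))"
    using add.IH(1) by blast
  obtain L2 C2 where 2: "C2 \<ge> 0" "\<And>\<phi> x. P \<phi> \<Longrightarrow> norm (B \<phi> x) \<le> C2 * (\<Sum>\<beta>\<leftarrow>L2. norm (T \<beta> \<phi> x))"
    using add.IH(2) by blast
  show ?case
  proof (intro exI[of _ "L1 @ L2"] exI[of _ "C1 + C2"] conjI allI impI)
    show "C1 + C2 \<ge> 0" using 1 2 by simp
    fix \<phi> x assume p: "P \<phi>"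
    define S1 where "S1 = (\<Sum>\<beta>\<leftarrow>L1. norm (T \<beta> \<phi> x))"
    define S2 where "S2 = (\<Sum>\<beta>\<leftarrow>L2. norm (T \<beta> \<phi> x))"
    have S: "S1 \<ge> 0" "S2 \<ge> 0" unfolding S1_def S2_def by (auto intro!: sum_list_nonneg)
    have "norm (A \<phi> x + B \<phi> x) \<le> C1 * S1 + C2 * S2"
      using 1(2)[OF p, of x] 2(2)[OF p, of x] norm_triangle_ineq[of "A \<phi> x" "B \<phi> x"]
      unfolding S1_def S2_def by linarith
    also have "\<dots> \<le> (C1 + C2) * (S1 + S2)"
      using S 1(1) 2(1) by (simp add: algebra_simps add_increasing2 mult_nonneg_nonneg)
    finally show "norm (A \<phi> x + B \<phi> x) \<le> (C1 + C2) * (\<Sum>\<beta>\<leftarrow>L1 @ L2. norm (T \<beta> \<phi> x))"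
      by (simp add: S1_def S2_def)
  qed
next
  case (scl A a b)
  obtain L1 C1 where 1: "C1 \<ge> 0" "\<And>\<phi> x. P \<phi> \<Longrightarrow> norm (A \<phi> x) \<le> C1 * (\<Sum>\<beta>\<leftarrow>L1. norm (T \<beta> \<phi> x))"
    using scl.IH by blast
  show ?case
  proof (intro exI[of _ L1] exI[of _ "(\<bar>a\<bar> + \<bar>b\<bar>) * C1"] conjI allI impI)
    show "(\<bar>a\<bar> + \<bar>b\<bar>) * C1 \<ge> 0" using 1 by simp
    fix \<phi> x assume p: "P \<phi>"
    have "norm (trig a b (fst x) *\<^sub>R A \<phi> x) = \<bar>trig a b (fst x)\<bar> * norm (A \<phi> x)" by simp
    also have "\<dots> \<le> (\<bar>a\<bar> + \<bar>b\<bar>) * (C1 * (\<Sum>\<beta>\<leftarrow>L1. norm (T \<beta> \<phi> x)))"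
      by (rule mult_mono[OF trig_bound 1(2)[OF p]]) auto
    finally show "norm (trig a b (fst x) *\<^sub>R A \<phi> x) \<le> (\<bar>a\<bar> + \<bar>b\<bar>) * C1 * (\<Sum>\<beta>\<leftarrow>L1. norm (T \<beta> \<phi> x))"
      by (simp add: mult.assoc)
  qed
qed

lemma Op_bound: "A \<in> Op \<Longrightarrow> \<exists>L C. C \<ge> 0 \<and> (\<forall>\<phi>. smooth \<phi> \<longrightarrow> (\<forall>x. norm (A \<phi> x) \<le> C * (\<Sum>\<beta>\<leftarrow>L. norm (pdalpha \<beta> \<phi> x))))"
proof (erule OpB_bound)
  fix B assume "B \<in> Bpds"
  then obtain w where w: "B = pds w" "set w \<subseteq> {0,1,2}" by (auto simp: Bpds_def)
  show "\<exists>L C. C \<ge> 0 \<and> (\<forall>\<phi>. smooth \<phi> \<longrightarrow> (\<forall>x. norm (B \<phi> x) \<le> C * (\<Sum>\<beta>\<leftarrow>L. norm (pdalpha \<beta> \<phi> x))))"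
    using w pds_canon by (intro exI[of _ "[cnt w]"] exI[of _ 1]) auto
qed

lemma smooth_d: "smooth F \<Longrightarrow> i \<in> {0,1,2} \<Longrightarrow> (\<lambda>h. F (y + h *\<^sub>R ev i)) differentiable (at 0)"
proof -
  assume s: "smooth F" and i: "i \<in> {0,1,2}"
  have e: "set ([]::nat list) \<subseteq> {0,1,2}" by simp
  from s[unfolded smooth_def, rule_format, OF e]
  have "\<forall>i\<in>{0,1,2}. \<forall>x. (\<lambda>h. pds [] F (x + h *\<^sub>R ev i)) differentiable (at 0)" by blast
  then have "(\<lambda>h. pds [] F (y + h *\<^sub>R ev i)) differentiable (at 0)" using i by blast
  then show ?thesis by simp
qed

lemma smooth_pd_d: "smooth F \<Longrightarrow> i \<in> {0,1,2} \<Longrightarrow> j \<in> {0,1,2} \<Longrightarrow> (\<lambda>h. pd j F (y + h *\<^sub>R ev i)) differentiable (at 0)"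
  using smooth_d[OF pd_smooth] by blast

lemma Rop_formula:
  assumes s: "smooth F"
  shows "Rop 1 F x = cos (fst x) *\<^sub>R pd 1 F x + (- sin (fst x)) *\<^sub>R pd 2 F x"
    and "Rop 2 F x = (- sin (fst x)) *\<^sub>R pd 1 F x + (- cos (fst x)) *\<^sub>R pd 2 F x"
proof -
  have d1: "\<forall>y. (\<lambda>h. F (y + h *\<^sub>R ev 1)) differentiable (at 0)" using smooth_d[OF s] by auto
  have d2: "\<forall>y. (\<lambda>h. F (y + h *\<^sub>R ev 2)) differentiable (at 0)" using smooth_d[OF s] by auto
  have c: "continuous_on UNIV (pd 2 F)" using smooth_pds[OF s, of "[2]"] by simp
  show "Rop 1 F x = cos (fst x) *\<^sub>R pd 1 F x + (- sin (fst x)) *\<^sub>R pd 2 F x"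
    unfolding Rop1 dd_def by (rule vector_derivative_at[OF dir_deriv[OF d1 d2 c]])
  show "Rop 2 F x = (- sin (fst x)) *\<^sub>R pd 1 F x + (- cos (fst x)) *\<^sub>R pd 2 F x"
    unfolding Rop2 dd_def by (rule vector_derivative_at[OF dir_deriv[OF d1 d2 c]])
qed

lemma trig_simps: "trig 1 0 t = cos t" "trig 0 (-1) t = - sin t" "trig (-1) 0 t = - cos t"
  by (auto simp: trig_def)

lemma Op_Rop: "A \<in> Op \<Longrightarrow> i \<in> {0,1,2} \<Longrightarrow> \<exists>A'\<in>Op. \<forall>\<phi>. smooth \<phi> \<longrightarrow> Rop i (A \<phi>) = A' \<phi>"
proof -
  assume A: "A \<in> Op" and i: "i \<in> {0,1,2}"
  obtain A0 where A0: "A0 \<in> Op" "\<forall>\<phi>. smooth \<phi> \<longrightarrow> pd 0 (A \<phi>) = A0 \<phi>" using Op_pd[OF A] by blast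
  obtain A1 where A1: "A1 \<in> Op" "\<forall>\<phi>. smooth \<phi> \<longrightarrow> pd 1 (A \<phi>) = A1 \<phi>" using Op_pd[OF A] by blast
  obtain A2 where A2: "A2 \<in> Op" "\<forall>\<phi>. smooth \<phi> \<longrightarrow> pd 2 (A \<phi>) = A2 \<phi>" using Op_pd[OF A] by blast
  consider "i = 0" | "i = 1" | "i = 2" using i by auto
  then show ?thesis
  proof cases
    case 1 then show ?thesis using A0 by (intro bexI[of _ A0]) (auto simp: Rop0)
  next
    case 2
    define B where "B = (\<lambda>\<phi> x. trig 1 0 (fst x) *\<^sub>R A1 \<phi> x + trig 0 (-1) (fst x) *\<^sub>R A2 \<phi> x)"
    have "B \<in> Op" unfolding B_def by (intro OpB.add OpB.scl A1(1) A2(1))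
    moreover have "\<forall>\<phi>. smooth \<phi> \<longrightarrow> Rop i (A \<phi>) = B \<phi>"
    proof (intro allI impI ext)
      fix \<phi> x assume s: "smooth \<phi>"
      show "Rop i (A \<phi>) x = B \<phi> x"
        using Rop_formula(1)[OF Op_smooth[OF A s], of x] A1(2) A2(2) s 2
        by (simp add: B_def trig_simps)
    qed
    ultimately show ?thesis by blast
  next
    case 3
    define B where "B = (\<lambda>\<phi> x. trig 0 (-1) (fst x) *\<^sub>R A1 \<phi> x + trig (-1) 0 (fst x) *\<^sub>R A2 \<phi> x)"
    have "B \<in> Op" unfolding B_def by (intro OpB.add OpB.scl A1(1) A2(1))
    moreover have "\<forall>\<phi>. smooth \<phi> \<longrightarrow> Rop i (A \<phi>) = B \<phi>"
    proof (intro allI impI ext)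
      fix \<phi> x assume s: "smooth \<phi>"
      show "Rop i (A \<phi>) x = B \<phi> x"
        using Rop_formula(2)[OF Op_smooth[OF A s], of x] A1(2) A2(2) s 3
        by (simp add: B_def trig_simps)
    qed
    ultimately show ?thesis by blast
  qed
qed

lemma Op_Rop_pow: "A \<in> Op \<Longrightarrow> i \<in> {0,1,2} \<Longrightarrow> \<exists>A'\<in>Op. \<forall>\<phi>. smooth \<phi> \<longrightarrow> (Rop i ^^ n) (A \<phi>) = A' \<phi>"
proof (induction n)
  case 0 then show ?case by auto
next
  case (Suc n)
  then obtain A' where A': "A' \<in> Op" "\<forall>\<phi>. smooth \<phi> \<longrightarrow> (Rop i ^^ n) (A \<phi>) = A' \<phi>" by blast
  obtain A'' where A'': "A'' \<in> Op" "\<forall>\<phi>. smooth \<phi> \<longrightarrow> Rop i (A' \<phi>) = A'' \<phi>"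
    using Op_Rop[OF A'(1) Suc.prems(2)] by blast
  show ?case using A' A'' by (intro bexI[of _ A'']) auto
qed

lemma Op_id: "(\<lambda>\<phi>. \<phi>) \<in> Op"
proof -
  have "pds [] \<in> Bpds" by (rule Bpds_I) simp
  then have "pds [] \<in> Op" by (rule OpB.base)
  moreover have "pds [] = (\<lambda>\<phi>. \<phi>)" by (rule ext) simp
  ultimately show ?thesis by simp
qed

lemma Xalpha_Op: "\<exists>A\<in>Op. \<forall>\<phi>. smooth \<phi> \<longrightarrow> Xalpha \<alpha> \<phi> = A \<phi>"
proof -
  obtain a b c where \<alpha>: "\<alpha> = (a,b,c)" by (cases \<alpha>)
  obtain A2 where A2: "A2 \<in> Op" "\<forall>\<phi>. smooth \<phi> \<longrightarrow> (Rop 2 ^^ c) \<phi> = A2 \<phi>"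
    using Op_Rop_pow[OF Op_id, of 2 c] by auto
  obtain A1 where A1: "A1 \<in> Op" "\<forall>\<phi>. smooth \<phi> \<longrightarrow> (Rop 1 ^^ b) (A2 \<phi>) = A1 \<phi>"
    using Op_Rop_pow[OF A2(1), of 1 b] by auto
  obtain A0 where A0: "A0 \<in> Op" "\<forall>\<phi>. smooth \<phi> \<longrightarrow> (Rop 0 ^^ a) (A1 \<phi>) = A0 \<phi>"
    using Op_Rop_pow[OF A1(1), of 0 a] by auto
  show ?thesis using A0 A1 A2 by (intro bexI[of _ A0]) (auto simp: \<alpha> Xalpha_R)
qed

lemma Xalpha_smooth: "smooth \<phi> \<Longrightarrow> smooth (Xalpha \<alpha> \<phi>)"
  using Xalpha_Op[of \<alpha>] Op_smooth by metis

lemma X_bound: "\<exists>L C. C \<ge> 0 \<and> (\<forall>\<phi>. smooth \<phi> \<longrightarrow> (\<forall>x. norm (Xalpha \<alpha> \<phi> x) \<le> C * (\<Sum>\<beta>\<leftarrow>L. norm (pdalpha \<beta> \<phi> x))))"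
proof -
  obtain A where A: "A \<in> Op" "\<forall>\<phi>. smooth \<phi> \<longrightarrow> Xalpha \<alpha> \<phi> = A \<phi>" using Xalpha_Op by blast
  obtain L C where "C \<ge> 0" "\<forall>\<phi>. smooth \<phi> \<longrightarrow> (\<forall>x. norm (A \<phi> x) \<le> C * (\<Sum>\<beta>\<leftarrow>L. norm (pdalpha \<beta> \<phi> x)))"
    using Op_bound[OF A(1)] by blast
  then show ?thesis using A(2) by (intro exI[of _ L] exI[of _ C]) auto
qed

lemma vd_scale_const: "(f has_vector_derivative D) F \<Longrightarrow> ((\<lambda>h. c *\<^sub>R f h) has_vector_derivative c *\<^sub>R D) F"
  for f :: "real \<Rightarrow> 'a::real_normed_vector"
  using bounded_linear.has_vector_derivative[OF bounded_linear_scaleR_right] by blast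

lemma pd_lin12:
  fixes F G :: "pt \<Rightarrow> complex"
  assumes i: "i \<noteq> 0" and dF: "(\<lambda>h. F (x + h *\<^sub>R ev i)) differentiable (at 0)"
    and dG: "(\<lambda>h. G (x + h *\<^sub>R ev i)) differentiable (at 0)"
  shows "pd i (\<lambda>y. p (fst y) *\<^sub>R F y + q (fst y) *\<^sub>R G y) x = p (fst x) *\<^sub>R pd i F x + q (fst x) *\<^sub>R pd i G x"
proof -
  have f: "fst (x + h *\<^sub>R ev i) = fst x" for h using fst_ev(2)[OF i] by simp
  have "((\<lambda>h. p (fst x) *\<^sub>R F (x + h *\<^sub>R ev i) + q (fst x) *\<^sub>R G (x + h *\<^sub>R ev i)) has_vector_derivative
     (p (fst x) *\<^sub>R pd i F x + q (fst x) *\<^sub>R pd i G x)) (at 0)"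
    by (intro has_vector_derivative_add vd_scale_const pd_has dF dG)
  then show ?thesis unfolding pd_def[of i "\<lambda>y. p (fst y) *\<^sub>R F y + q (fst y) *\<^sub>R G y"] f
    by (rule vector_derivative_at)
qed

lemma Rop_smooth: "smooth \<psi> \<Longrightarrow> i \<in> {0,1,2} \<Longrightarrow> smooth (Rop i \<psi>)"
  using Op_Rop[OF Op_id] Op_smooth by metis

lemma Rop_pow_smooth: "smooth \<psi> \<Longrightarrow> i \<in> {0,1,2} \<Longrightarrow> smooth ((Rop i ^^ n) \<psi>)"
  by (induction n) (auto intro: Rop_smooth)

lemma Rop21:
  assumes s: "smooth \<psi>"
  shows "Rop 2 (Rop 1 \<psi>) = Rop 1 (Rop 2 \<psi>)"
proof
  fix x :: pt
  define c where "c = cos (fst x)"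
  define sn where "sn = sin (fst x)"
  have e1: "Rop 1 \<psi> = (\<lambda>y. cos (fst y) *\<^sub>R pd 1 \<psi> y + (- sin (fst y)) *\<^sub>R pd 2 \<psi> y)"
    by (rule ext) (rule Rop_formula(1)[OF s])
  have e2: "Rop 2 \<psi> = (\<lambda>y. (- sin (fst y)) *\<^sub>R pd 1 \<psi> y + (- cos (fst y)) *\<^sub>R pd 2 \<psi> y)"
    by (rule ext) (rule Rop_formula(2)[OF s])
  have d: "(\<lambda>h. pd j \<psi> (x + h *\<^sub>R ev i)) differentiable (at 0)" if "i \<in> {0,1,2}" "j \<in> {0,1,2}" for i j
    using smooth_pd_d[OF s that(1) that(2)] .
  have p11: "pd 1 (Rop 1 \<psi>) x = c *\<^sub>R pd 1 (pd 1 \<psi>) x + (- sn) *\<^sub>R pd 1 (pd 2 \<psi>) x"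
    unfolding e1 c_def sn_def by (rule pd_lin12[of 1 "pd 1 \<psi>" x "pd 2 \<psi>" cos "\<lambda>t. - sin t"]) (auto intro: d)
  have p21: "pd 2 (Rop 1 \<psi>) x = c *\<^sub>R pd 2 (pd 1 \<psi>) x + (- sn) *\<^sub>R pd 2 (pd 2 \<psi>) x"
    unfolding e1 c_def sn_def by (rule pd_lin12[of 2 "pd 1 \<psi>" x "pd 2 \<psi>" cos "\<lambda>t. - sin t"]) (auto intro: d)
  have p12: "pd 1 (Rop 2 \<psi>) x = (- sn) *\<^sub>R pd 1 (pd 1 \<psi>) x + (- c) *\<^sub>R pd 1 (pd 2 \<psi>) x"
    unfolding e2 c_def sn_def by (rule pd_lin12[of 1 "pd 1 \<psi>" x "pd 2 \<psi>" "\<lambda>t. - sin t" "\<lambda>t. - cos t"]) (auto intro: d)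
  have p22: "pd 2 (Rop 2 \<psi>) x = (- sn) *\<^sub>R pd 2 (pd 1 \<psi>) x + (- c) *\<^sub>R pd 2 (pd 2 \<psi>) x"
    unfolding e2 c_def sn_def by (rule pd_lin12[of 2 "pd 1 \<psi>" x "pd 2 \<psi>" "\<lambda>t. - sin t" "\<lambda>t. - cos t"]) (auto intro: d)
  have sw: "pd 2 (pd 1 \<psi>) = pd 1 (pd 2 \<psi>)" by (rule swap[OF s]) auto
  have "Rop 2 (Rop 1 \<psi>) x = (- sn) *\<^sub>R pd 1 (Rop 1 \<psi>) x + (- c) *\<^sub>R pd 2 (Rop 1 \<psi>) x"
    using Rop_formula(2)[OF Rop_smooth[OF s], of 1 x] by (simp add: c_def sn_def)
  also have "\<dots> = c *\<^sub>R pd 1 (Rop 2 \<psi>) x + (- sn) *\<^sub>R pd 2 (Rop 2 \<psi>) x"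
    unfolding p11 p21 p12 p22 sw by (simp add: algebra_simps)
  also have "\<dots> = Rop 1 (Rop 2 \<psi>) x"
    using Rop_formula(1)[OF Rop_smooth[OF s], of 2 x] by (simp add: c_def sn_def)
  finally show "Rop 2 (Rop 1 \<psi>) x = Rop 1 (Rop 2 \<psi>) x" .
qed

lemma Rop2_pow: "smooth \<psi> \<Longrightarrow> Rop 2 ((Rop 1 ^^ b) \<psi>) = (Rop 1 ^^ b) (Rop 2 \<psi>)"
proof (induction b)
  case (Suc b)
  have "Rop 2 ((Rop 1 ^^ Suc b) \<psi>) = Rop 1 (Rop 2 ((Rop 1 ^^ b) \<psi>))"
    using Rop21[OF Rop_pow_smooth[OF Suc.prems, of 1 b]] by simp
  then show ?case using Suc by simp
qed simp

lemma OpB_sub: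
  assumes "A \<in> OpB Bs"
    and "\<And>B. B \<in> Bs \<Longrightarrow> \<exists>A'\<in>OpB Bs'. \<forall>\<phi>. P \<phi> \<longrightarrow> B \<phi> = A' \<phi>"
  shows "\<exists>A'\<in>OpB Bs'. \<forall>\<phi>. P \<phi> \<longrightarrow> A \<phi> = A' \<phi>"
  using assms(1)
proof (induction A rule: OpB.induct)
  case (base A)
  then show ?case using assms(2) by blast
next
  case (add A B)
  obtain A' where A': "A' \<in> OpB Bs'" "\<forall>\<phi>. P \<phi> \<longrightarrow> A \<phi> = A' \<phi>" using add.IH(1) by blast
  obtain B' where B': "B' \<in> OpB Bs'" "\<forall>\<phi>. P \<phi> \<longrightarrow> B \<phi> = B' \<phi>" using add.IH(2) by blast
  have "(\<lambda>\<phi> x. A' \<phi> x + B' \<phi> x) \<in> OpB Bs'" using A'(1) B'(1) by (rule OpB.add)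
  then show ?case using A'(2) B'(2) by (intro bexI[of _ "\<lambda>\<phi> x. A' \<phi> x + B' \<phi> x"]) auto
next
  case (scl A a b)
  obtain A' where A': "A' \<in> OpB Bs'" "\<forall>\<phi>. P \<phi> \<longrightarrow> A \<phi> = A' \<phi>" using scl.IH by blast
  have "(\<lambda>\<phi> x. trig a b (fst x) *\<^sub>R A' \<phi> x) \<in> OpB Bs'" using A'(1) by (rule OpB.scl)
  then show ?case using A'(2) by (intro bexI[of _ "\<lambda>\<phi> x. trig a b (fst x) *\<^sub>R A' \<phi> x"]) auto
qed

lemma OpB_pd:
  assumes "A \<in> OpB Bs"
    and base: "\<And>B. B \<in> Bs \<Longrightarrow> \<exists>A'\<in>OpB Bs. \<forall>\<phi>. P \<phi> \<longrightarrow> pd i (B \<phi>) = A' \<phi>"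
    and reg: "\<And>A \<phi> x. A \<in> OpB Bs \<Longrightarrow> P \<phi> \<Longrightarrow> (\<lambda>h. A \<phi> (x + h *\<^sub>R ev i)) differentiable (at 0)"
  shows "\<exists>A'\<in>OpB Bs. \<forall>\<phi>. P \<phi> \<longrightarrow> pd i (A \<phi>) = A' \<phi>"
  using assms(1)
proof (induction A rule: OpB.induct)
  case (base A)
  then show ?case using assms(2) by blast
next
  case (add A B)
  obtain A' where A': "A' \<in> OpB Bs" "\<And>\<phi>. P \<phi> \<Longrightarrow> pd i (A \<phi>) = A' \<phi>" using add by blast
  obtain B' where B': "B' \<in> OpB Bs" "\<And>\<phi>. P \<phi> \<Longrightarrow> pd i (B \<phi>) = B' \<phi>" using add by blast
  have m: "(\<lambda>\<phi> x. A' \<phi> x + B' \<phi> x) \<in> OpB Bs" using A'(1) B'(1) by (rule OpB.add)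
  have "pd i (\<lambda>x. A \<phi> x + B \<phi> x) x = A' \<phi> x + B' \<phi> x" if s: "P \<phi>" for \<phi> x
    by (simp only: pd_add[OF reg[OF add.hyps(1) s] reg[OF add.hyps(2) s]] A'(2)[OF s] B'(2)[OF s])
  then have "\<forall>\<phi>. P \<phi> \<longrightarrow> pd i (\<lambda>x. A \<phi> x + B \<phi> x) = (\<lambda>x. A' \<phi> x + B' \<phi> x)"
    by (intro allI impI ext)
  with m show ?case by (intro bexI[of _ "\<lambda>\<phi> x. A' \<phi> x + B' \<phi> x"])
next
  case (scl A a b)
  obtain A' where A': "A' \<in> OpB Bs" "\<And>\<phi>. P \<phi> \<Longrightarrow> pd i (A \<phi>) = A' \<phi>" using scl by blast
  define C where "C = (\<lambda>\<phi> x. trig (fst (ev i) * b) (fst (ev i) * (-a)) (fst x) *\<^sub>R A \<phi> x + trig a b (fst x) *\<^sub>R A' \<phi> x)"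
  have m: "C \<in> OpB Bs" unfolding C_def by (intro OpB.add OpB.scl scl.hyps A'(1))
  have "pd i (\<lambda>x. trig a b (fst x) *\<^sub>R A \<phi> x) x = C \<phi> x" if s: "P \<phi>" for \<phi> x
  proof -
    have t: "fst (ev i) * trig b (-a) (fst x) = trig (fst (ev i) * b) (fst (ev i) * (-a)) (fst x)"
      by (simp add: trig_def algebra_simps)
    show ?thesis unfolding C_def by (simp only: pd_scl[OF reg[OF scl.hyps s]] A'(2)[OF s] t)
  qed
  then have "\<forall>\<phi>. P \<phi> \<longrightarrow> pd i (\<lambda>x. trig a b (fst x) *\<^sub>R A \<phi> x) = C \<phi>"
    by (intro allI impI ext)
  with m show ?case by (intro bexI[of _ C])
qed

lemma OpB_pd_pow:
  assumes "A \<in> OpB Bs"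
    and cl: "\<And>A. A \<in> OpB Bs \<Longrightarrow> \<exists>A'\<in>OpB Bs. \<forall>\<phi>. P \<phi> \<longrightarrow> pd i (A \<phi>) = A' \<phi>"
  shows "\<exists>A'\<in>OpB Bs. \<forall>\<phi>. P \<phi> \<longrightarrow> (pd i ^^ n) (A \<phi>) = A' \<phi>"
proof (induction n)
  case 0 then show ?case using assms(1) by auto
next
  case (Suc n)
  then obtain A' where A': "A' \<in> OpB Bs" "\<forall>\<phi>. P \<phi> \<longrightarrow> (pd i ^^ n) (A \<phi>) = A' \<phi>" by blast
  obtain A'' where A'': "A'' \<in> OpB Bs" "\<forall>\<phi>. P \<phi> \<longrightarrow> pd i (A' \<phi>) = A'' \<phi>" using cl[OF A'(1)] by blast
  show ?case using A' A'' by (intro bexI[of _ A'']) auto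
qed

definition BX :: "((pt \<Rightarrow> complex) \<Rightarrow> pt \<Rightarrow> complex) set" where
  "BX = range (\<lambda>\<gamma> \<phi>. Xalpha \<gamma> \<phi>)"
definition BX0 :: "((pt \<Rightarrow> complex) \<Rightarrow> pt \<Rightarrow> complex) set" where
  "BX0 = {(\<lambda>\<phi>. Xalpha (0,b,c) \<phi>) | b c. True}"

lemma Op2_Op: "A \<in> OpB BX \<Longrightarrow> \<exists>A'\<in>Op. \<forall>\<phi>. smooth \<phi> \<longrightarrow> A \<phi> = A' \<phi>"
  by (erule OpB_sub) (auto simp: BX_def intro: Xalpha_Op)

lemma Op2_smooth: "A \<in> OpB BX \<Longrightarrow> smooth \<phi> \<Longrightarrow> smooth (A \<phi>)"
  using Op2_Op Op_smooth by metis

lemma Op3_Op2: "A \<in> OpB BX0 \<Longrightarrow> \<exists>A'\<in>OpB BX. \<forall>\<phi>. smooth \<phi> \<longrightarrow> A \<phi> = A' \<phi>"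
proof (erule OpB_sub)
  fix B assume "B \<in> BX0"
  then have "B \<in> BX" by (auto simp: BX0_def BX_def)
  then have "B \<in> OpB BX" by (rule OpB.base)
  then show "\<exists>A'\<in>OpB BX. \<forall>\<phi>. smooth \<phi> \<longrightarrow> B \<phi> = A' \<phi>" by blast
qed

lemma Op3_smooth: "A \<in> OpB BX0 \<Longrightarrow> smooth \<phi> \<Longrightarrow> smooth (A \<phi>)"
  using Op3_Op2 Op2_smooth by metis

lemma Op2_pd0: "A \<in> OpB BX \<Longrightarrow> \<exists>A'\<in>OpB BX. \<forall>\<phi>. smooth \<phi> \<longrightarrow> pd 0 (A \<phi>) = A' \<phi>"
proof (erule OpB_pd)
  fix B assume "B \<in> BX"
  then obtain a b c where B: "B = Xalpha (a,b,c)" by (auto simp: BX_def)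
  have "Xalpha (Suc a, b, c) \<in> BX" by (auto simp: BX_def)
  then have m: "Xalpha (Suc a, b, c) \<in> OpB BX" by (rule OpB.base)
  have "pd 0 (B \<phi>) = Xalpha (Suc a, b, c) \<phi>" for \<phi>
    by (simp add: B Xalpha_R Rop0)
  then show "\<exists>A'\<in>OpB BX. \<forall>\<phi>. smooth \<phi> \<longrightarrow> pd 0 (B \<phi>) = A' \<phi>" using m by blast
next
  fix A \<phi> x assume "A \<in> OpB BX" "smooth \<phi>"
  then show "(\<lambda>h. A \<phi> (x + h *\<^sub>R ev 0)) differentiable (at 0)"
    using smooth_d[OF Op2_smooth] by blast
qed

lemma sincos1: "cos t * cos t + sin t * sin t = (1::real)"
  using sin_cos_squared_add[of t] by (simp add: power2_eq_square)

lemma Op3_pd: "A \<in> OpB BX0 \<Longrightarrow> i \<in> {1,2} \<Longrightarrow> \<exists>A'\<in>OpB BX0. \<forall>\<phi>. smooth \<phi> \<longrightarrow> pd i (A \<phi>) = A' \<phi>"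
proof (erule OpB_pd)
  assume i: "i \<in> {1,2}"
  fix B assume "B \<in> BX0"
  then obtain b c where B: "B = Xalpha (0,b,c)" by (auto simp: BX0_def)
  have m1: "Xalpha (0, Suc b, c) \<in> OpB BX0" by (rule OpB.base) (auto simp: BX0_def)
  have m2: "Xalpha (0, b, Suc c) \<in> OpB BX0" by (rule OpB.base) (auto simp: BX0_def)
  have R1: "Rop 1 (B \<phi>) = Xalpha (0, Suc b, c) \<phi>" for \<phi> by (simp add: B Xalpha_R)
  have R2: "Rop 2 (B \<phi>) = Xalpha (0, b, Suc c) \<phi>" if "smooth \<phi>" for \<phi>
    using Rop2_pow[OF Rop_pow_smooth[OF that, of 2 c], of b] by (simp add: B Xalpha_R)
  define p where "p = (if i = 1 then (1::real, 0::real, 0::real, -1::real) else (0, -1, -1, 0))"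
  define C where "C = (\<lambda>\<phi> x. trig (fst p) (fst (snd p)) (fst x) *\<^sub>R Xalpha (0, Suc b, c) \<phi> x
      + trig (fst (snd (snd p))) (snd (snd (snd p))) (fst x) *\<^sub>R Xalpha (0, b, Suc c) \<phi> x)"
  have m: "C \<in> OpB BX0" unfolding C_def by (intro OpB.add OpB.scl m1 m2)
  have "pd i (B \<phi>) x = C \<phi> x" if s: "smooth \<phi>" for \<phi> x
  proof -
    have sB: "smooth (B \<phi>)" using Xalpha_smooth[OF s] by (simp add: B)
    define co where "co = cos (fst x)"
    define si where "si = sin (fst x)"
    have f1: "Rop 1 (B \<phi>) x = co *\<^sub>R pd 1 (B \<phi>) x + (- si) *\<^sub>R pd 2 (B \<phi>) x"
      using Rop_formula(1)[OF sB] by (simp add: co_def si_def)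
    have f2: "Rop 2 (B \<phi>) x = (- si) *\<^sub>R pd 1 (B \<phi>) x + (- co) *\<^sub>R pd 2 (B \<phi>) x"
      using Rop_formula(2)[OF sB] by (simp add: co_def si_def)
    have one: "co * co + si * si = 1" by (simp add: co_def si_def sincos1)
    show ?thesis
    proof (cases "i = 1")
      case True
      have "C \<phi> x = co *\<^sub>R Xalpha (0, Suc b, c) \<phi> x + (- si) *\<^sub>R Xalpha (0, b, Suc c) \<phi> x"
        using True by (simp add: C_def p_def trig_def co_def si_def)
      also have "\<dots> = co *\<^sub>R Rop 1 (B \<phi>) x + (- si) *\<^sub>R Rop 2 (B \<phi>) x"
        by (simp only: R1 R2[OF s])
      also have "\<dots> = (co * co + si * si) *\<^sub>R pd 1 (B \<phi>) x"
        unfolding f1 f2 by (simp add: algebra_simps)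
      finally show ?thesis using True one by simp
    next
      case False
      then have i2: "i = 2" using i by auto
      have "C \<phi> x = (- si) *\<^sub>R Xalpha (0, Suc b, c) \<phi> x + (- co) *\<^sub>R Xalpha (0, b, Suc c) \<phi> x"
        using i2 by (simp add: C_def p_def trig_def co_def si_def)
      also have "\<dots> = (- si) *\<^sub>R Rop 1 (B \<phi>) x + (- co) *\<^sub>R Rop 2 (B \<phi>) x"
        by (simp only: R1 R2[OF s])
      also have "\<dots> = (co * co + si * si) *\<^sub>R pd 2 (B \<phi>) x"
        unfolding f1 f2 by (simp add: algebra_simps)
      finally show ?thesis using i2 one by simp
    qed
  qed
  then show "\<exists>A'\<in>OpB BX0. \<forall>\<phi>. smooth \<phi> \<longrightarrow> pd i (B \<phi>) = A' \<phi>"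
    using m by (intro bexI[of _ C]) auto
next
  fix A \<phi> x assume "A \<in> OpB BX0" "smooth \<phi>" "i \<in> {1,2}"
  then show "(\<lambda>h. A \<phi> (x + h *\<^sub>R ev i)) differentiable (at 0)"
    using smooth_d[OF Op3_smooth] by blast
qed

lemma pdalpha_Op2: "\<exists>A\<in>OpB BX. \<forall>\<phi>. smooth \<phi> \<longrightarrow> pdalpha \<alpha> \<phi> = A \<phi>"
proof -
  obtain a b c where \<alpha>: "\<alpha> = (a,b,c)" by (cases \<alpha>)
  have m0: "Xalpha (0,0,0) \<in> OpB BX0" by (rule OpB.base) (auto simp: BX0_def)
  have X0: "Xalpha (0,0,0) \<phi> = \<phi>" for \<phi> by (simp add: Xalpha_R)
  obtain A3 where A3: "A3 \<in> OpB BX0" "\<forall>\<phi>. smooth \<phi> \<longrightarrow> (pd 2 ^^ c) (Xalpha (0,0,0) \<phi>) = A3 \<phi>"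
    using OpB_pd_pow[OF m0 Op3_pd, of 2 c] by auto
  obtain A2 where A2: "A2 \<in> OpB BX0" "\<forall>\<phi>. smooth \<phi> \<longrightarrow> (pd 1 ^^ b) (A3 \<phi>) = A2 \<phi>"
    using OpB_pd_pow[OF A3(1) Op3_pd, of 1 b] by auto
  obtain A2' where A2': "A2' \<in> OpB BX" "\<forall>\<phi>. smooth \<phi> \<longrightarrow> A2 \<phi> = A2' \<phi>"
    using Op3_Op2[OF A2(1)] by blast
  obtain A1 where A1: "A1 \<in> OpB BX" "\<forall>\<phi>. smooth \<phi> \<longrightarrow> (pd 0 ^^ a) (A2' \<phi>) = A1 \<phi>"
    using OpB_pd_pow[OF A2'(1) Op2_pd0, of a] by auto
  show ?thesis using A1 A2 A2' A3 by (intro bexI[of _ A1]) (auto simp: \<alpha> pdalpha_def X0)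
qed

lemma pd_bound: "\<exists>L C. C \<ge> 0 \<and> (\<forall>\<phi>. smooth \<phi> \<longrightarrow> (\<forall>x. norm (pdalpha \<alpha> \<phi> x) \<le> C * (\<Sum>\<gamma>\<leftarrow>L. norm (Xalpha \<gamma> \<phi> x))))"
proof -
  obtain A where A: "A \<in> OpB BX" "\<forall>\<phi>. smooth \<phi> \<longrightarrow> pdalpha \<alpha> \<phi> = A \<phi>" using pdalpha_Op2 by blast
  obtain L C where "C \<ge> 0" "\<forall>\<phi>. smooth \<phi> \<longrightarrow> (\<forall>x. norm (A \<phi> x) \<le> C * (\<Sum>\<gamma>\<leftarrow>L. norm (Xalpha \<gamma> \<phi> x)))"
  proof -
    have "\<exists>L C. C \<ge> 0 \<and> (\<forall>\<phi>. smooth \<phi> \<longrightarrow> (\<forall>x. norm (A \<phi> x) \<le> C * (\<Sum>\<gamma>\<leftarrow>L. norm (Xalpha \<gamma> \<phi> x))))"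
    proof (rule OpB_bound[OF A(1)])
      fix B assume "B \<in> BX"
      then obtain \<gamma> where "B = Xalpha \<gamma>" by (auto simp: BX_def)
      then show "\<exists>L C. C \<ge> 0 \<and> (\<forall>\<phi>. smooth \<phi> \<longrightarrow> (\<forall>x. norm (B \<phi> x) \<le> C * (\<Sum>\<gamma>\<leftarrow>L. norm (Xalpha \<gamma> \<phi> x))))"
        by (intro exI[of _ "[\<gamma>]"] exI[of _ 1]) auto
    qed
    then show ?thesis using that by blast
  qed
  then show ?thesis using A(2) by (intro exI[of _ L] exI[of _ C]) auto
qed

definition sz :: "pt \<Rightarrow> real" where
  "sz x = \<bar>fst x\<bar> + \<bar>fst (snd x)\<bar> + \<bar>snd (snd x)\<bar>"

lemma sz_nonneg: "sz x \<ge> 0" by (simp add: sz_def)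

lemma comp_le_norm: fixes v :: pt
  shows "\<bar>fst v\<bar> \<le> norm v" "\<bar>fst (snd v)\<bar> \<le> norm v" "\<bar>snd (snd v)\<bar> \<le> norm v"
proof -
  obtain a b c where v: "v = (a,b,c)" by (cases v)
  show "\<bar>fst v\<bar> \<le> norm v" using norm_fst_le[of a "(b,c)"] by (simp add: v)
  show "\<bar>fst (snd v)\<bar> \<le> norm v" using norm_snd_le[of "(b,c)" a] norm_fst_le[of b c] by (simp add: v)
  show "\<bar>snd (snd v)\<bar> \<le> norm v" using norm_snd_le[of "(b,c)" a] norm_snd_le[of c b] by (simp add: v)
qed

lemma norm_le_sz: fixes v :: pt shows "norm v \<le> sz v"
proof -
  obtain a b c where v: "v = (a,b,c)" by (cases v)
  have "norm (a,b,c) \<le> norm a + norm (b,c)" by (rule norm_Pair_le)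
  also have "\<dots> \<le> norm a + (norm b + norm c)" using norm_Pair_le[of b c] by simp
  finally show ?thesis by (simp add: v sz_def)
qed

lemma sz_le_norm: fixes v :: pt shows "sz v \<le> 3 * norm v"
  using comp_le_norm[of v] by (simp add: sz_def)

definition AdL :: "pt \<Rightarrow> pt \<Rightarrow> pt" where
  "AdL g v = (fst v,
     cos (fst g) * fst (snd v) + sin (fst g) * snd (snd v) - snd (snd g) * fst v,
     - sin (fst g) * fst (snd v) + cos (fst g) * snd (snd v) + fst (snd g) * fst v)"

lemma conj_deriv: "((\<lambda>h. gmult (gmult g h) (ginv g)) has_derivative AdL g) (at 0)"
proof -
  obtain t n1 n2 where g: "g = (t,n1,n2)" by (cases g)
  have e: "(\<lambda>h. gmult (gmult g h) (ginv g)) = (\<lambda>h. (t + fst h + - t,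
     n1 + fst (snd h) * cos t + snd (snd h) * sin t +
       - (n1 * cos t - n2 * sin t) * cos (t + fst h) + - (n1 * sin t + n2 * cos t) * sin (t + fst h),
     n2 - fst (snd h) * sin t + snd (snd h) * cos t -
       - (n1 * cos t - n2 * sin t) * sin (t + fst h) + - (n1 * sin t + n2 * cos t) * cos (t + fst h)))"
    by (simp add: g gmult_eq ginv_eq fun_eq_iff)
  have s: "sin t * sin t = 1 - cos t * cos t" using sincos1[of t] by linarith
  show ?thesis unfolding e
    by (auto intro!: derivative_eq_intros has_derivative_fst[OF has_derivative_ident] has_derivative_snd[OF has_derivative_ident]
        simp: AdL_def g fun_eq_iff algebra_simps s)
qed

lemma Ad_eq: "Ad g = AdL g"
  unfolding Ad_def using frechet_derivative_at[OF conj_deriv] by (simp add: zero_prod_def)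

lemma AdL_lin: "bounded_linear (AdL g)"
  using conj_deriv has_derivative_bounded_linear by blast

lemma onorm_Ad_ge: "onorm (Ad g) \<ge> 1"
proof -
  have "norm (AdL g (0,1,0)) \<le> onorm (AdL g) * norm ((0,1,0)::pt)" by (rule onorm[OF AdL_lin])
  moreover have "AdL g (0,1,0) = (0, cos (fst g), - sin (fst g))" by (simp add: AdL_def)
  moreover have "norm ((0, cos (fst g), - sin (fst g))::pt) = 1"
  proof -
    have "norm ((0, cos (fst g), - sin (fst g))::pt) = norm (cos (fst g), - sin (fst g))" by simp
    also have "\<dots> = sqrt ((cos (fst g))\<^sup>2 + (sin (fst g))\<^sup>2)" by (simp add: norm_Pair)
    also have "\<dots> = 1" by (simp add: add.commute)
    finally show ?thesis .
  qed
  moreover have "norm ((0,1,0)::pt) = 1" by simp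
  ultimately show ?thesis by (simp add: Ad_eq)
qed

lemma abs3: "\<bar>x + y - z\<bar> \<le> \<bar>x\<bar> + \<bar>y\<bar> + \<bar>z::real\<bar>" "\<bar>- x + y + z\<bar> \<le> \<bar>x\<bar> + \<bar>y\<bar> + \<bar>z::real\<bar>"
  by linarith+

lemma onorm_Ad_le: "onorm (Ad g) \<le> 5 + \<bar>fst (snd g)\<bar> + \<bar>snd (snd g)\<bar>"
  unfolding Ad_eq
proof (rule onorm_le)
  fix v :: pt
  obtain t n1 n2 where g: "g = (t,n1,n2)" by (cases g)
  obtain a b c where v: "v = (a,b,c)" by (cases v)
  have na: "\<bar>a\<bar> \<le> norm v" "\<bar>b\<bar> \<le> norm v" "\<bar>c\<bar> \<le> norm v" using comp_le_norm[of v] by (auto simp: v)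
  have tr: "\<bar>cos t * b\<bar> \<le> \<bar>b\<bar>" "\<bar>sin t * c\<bar> \<le> \<bar>c\<bar>" "\<bar>sin t * b\<bar> \<le> \<bar>b\<bar>" "\<bar>cos t * c\<bar> \<le> \<bar>c\<bar>"
    using abs_sin_le_one[of t] abs_cos_le_one[of t]
    by (auto simp: abs_mult intro!: mult_left_le_one_le)
  have h1: "\<bar>cos t * b + sin t * c - n2 * a\<bar> \<le> \<bar>b\<bar> + \<bar>c\<bar> + \<bar>n2\<bar> * \<bar>a\<bar>"
    using abs3(1)[of "cos t * b" "sin t * c" "n2 * a"] tr by (simp add: abs_mult)
  have h2: "\<bar>- (sin t * b) + cos t * c + n1 * a\<bar> \<le> \<bar>b\<bar> + \<bar>c\<bar> + \<bar>n1\<bar> * \<bar>a\<bar>"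
    using abs3(2)[of "sin t * b" "cos t * c" "n1 * a"] tr by (simp add: abs_mult)
  have "norm (AdL g v) \<le> sz (AdL g v)" by (rule norm_le_sz)
  also have "sz (AdL g v) = \<bar>a\<bar> + \<bar>cos t * b + sin t * c - n2 * a\<bar> + \<bar>- (sin t * b) + cos t * c + n1 * a\<bar>"
    by (simp add: sz_def AdL_def g v)
  also have "\<dots> \<le> \<bar>a\<bar> + (\<bar>b\<bar> + \<bar>c\<bar> + \<bar>n2\<bar> * \<bar>a\<bar>) + (\<bar>b\<bar> + \<bar>c\<bar> + \<bar>n1\<bar> * \<bar>a\<bar>)"
    using h1 h2 by linarith
  also have "\<dots> \<le> (5 + \<bar>n1\<bar> + \<bar>n2\<bar>) * norm v"
  proof -
    have "\<bar>n2\<bar> * \<bar>a\<bar> \<le> \<bar>n2\<bar> * norm v" "\<bar>n1\<bar> * \<bar>a\<bar> \<le> \<bar>n1\<bar> * norm v"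
      using na by (auto intro: mult_left_mono)
    then show ?thesis using na by (simp add: algebra_simps)
  qed
  finally show "norm (AdL g v) \<le> (5 + \<bar>fst (snd g)\<bar> + \<bar>snd (snd g)\<bar>) * norm v" by (simp add: g)
qed

lemma sz_mult: "sz (gmult a u) \<le> sz a + 2 * sz u"
proof -
  obtain ta a1 a2 where a: "a = (ta,a1,a2)" by (cases a)
  obtain tu u1 u2 where u: "u = (tu,u1,u2)" by (cases u)
  have tr: "\<bar>u1 * cos ta\<bar> \<le> \<bar>u1\<bar>" "\<bar>u2 * sin ta\<bar> \<le> \<bar>u2\<bar>" "\<bar>u1 * sin ta\<bar> \<le> \<bar>u1\<bar>" "\<bar>u2 * cos ta\<bar> \<le> \<bar>u2\<bar>"
    using abs_sin_le_one[of ta] abs_cos_le_one[of ta]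
    by (auto simp: abs_mult intro!: mult_left_le)
  have "\<bar>a1 + u1 * cos ta + u2 * sin ta\<bar> \<le> \<bar>a1\<bar> + \<bar>u1\<bar> + \<bar>u2\<bar>" using tr by linarith
  moreover have "\<bar>a2 - u1 * sin ta + u2 * cos ta\<bar> \<le> \<bar>a2\<bar> + \<bar>u1\<bar> + \<bar>u2\<bar>" using tr by linarith
  moreover have "\<bar>ta + tu\<bar> \<le> \<bar>ta\<bar> + \<bar>tu\<bar>" by linarith
  ultimately show ?thesis using abs_ge_zero[of tu] abs_ge_zero[of u1] abs_ge_zero[of u2]
    by (simp add: sz_def gmult_eq a u) linarith
qed

lemma setpow_sz: "(\<And>u. u \<in> U \<Longrightarrow> sz u \<le> K) \<Longrightarrow> x \<in> setpow U j \<Longrightarrow> sz x \<le> 2 * K * real j"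
proof (induction j arbitrary: x)
  case 0 then show ?case by (simp add: sz_def)
next
  case (Suc j)
  then obtain y u where x: "x = gmult y u" "y \<in> setpow U j" "u \<in> U" by auto
  have "sz x \<le> sz y + 2 * sz u" using sz_mult x by simp
  also have "\<dots> \<le> 2 * K * real j + 2 * K" using Suc.IH[OF Suc.prems(1) x(2)] Suc.prems(1)[OF x(3)] by simp
  finally show ?case by (simp add: algebra_simps)
qed

lemma pow_N: "(0,a,b) \<in> W \<Longrightarrow> (0, real k * a, real k * b) \<in> setpow W k"
proof (induction k)
  case 0 then show ?case by (simp add: zero_prod_def)
next
  case (Suc k)
  have "gmult (0, real k * a, real k * b) (0,a,b) = (0, real (Suc k) * a, real (Suc k) * b)"
    by (simp add: gmult_eq algebra_simps)
  then have "\<exists>x y. (0, real (Suc k) * a, real (Suc k) * b) = gmult x y \<and> x \<in> setpow W k \<and> y \<in> W"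
    using Suc by (intro exI[of _ "(0, real k * a, real k * b)"] exI[of _ "(0,a,b)"]) auto
  then show ?case by (simp only: setpow.simps mem_Collect_eq)
qed

lemma pow_T: "y \<in> setpow U j \<Longrightarrow> (s,0,0) \<in> U \<Longrightarrow> (fst y + real k * s, snd y) \<in> setpow U (j + k)"
proof (induction k)
  case 0 then show ?case by simp
next
  case (Suc k)
  have "gmult (fst y + real k * s, snd y) (s,0,0) = (fst y + real (Suc k) * s, snd y)"
    by (simp add: gmult_eq algebra_simps)
  then have "\<exists>x z. (fst y + real (Suc k) * s, snd y) = gmult x z \<and> x \<in> setpow U (j + k) \<and> z \<in> U"
    using Suc by (intro exI[of _ "(fst y + real k * s, snd y)"] exI[of _ "(s,0,0)"]) auto
  then show ?case by (simp only: setpow.simps add_Suc_right mem_Collect_eq)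
qed

lemma len_bounds:
  assumes "0 \<in> interior U"
  shows "\<exists>c>0. \<forall>x. (\<exists>j. x \<in> setpow U j) \<and> real (lenG U x) \<le> c * (1 + sz x) \<and> real (lenN U (0, snd x)) \<le> c * (1 + sz x)"
proof -
  obtain r where r: "r > 0" "ball 0 r \<subseteq> U" using assms by (auto simp: mem_interior)
  have inU: "v \<in> U" if "sz v < r" for v
  proof -
    have "norm v < r" using norm_le_sz[of v] that by linarith
    then show ?thesis using r(2) by auto
  qed
  define c where "c = 2 / r + 4"
  have "2 / r > 0" using r by simp
  then have c: "c > 0" unfolding c_def by linarith
  have "(\<exists>j. x \<in> setpow U j) \<and> real (lenG U x) \<le> c * (1 + sz x) \<and> real (lenN U (0, snd x)) \<le> c * (1 + sz x)" for x
  proof -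
    obtain t n1 n2 where x: "x = (t,n1,n2)" by (cases x)
    define N where "N = nat \<lceil>sz x / r\<rceil> + 1"
    have szp: "sz x / r \<ge> 0" using sz_nonneg[of x] r by simp
    have N1: "real N = real_of_int \<lceil>sz x / r\<rceil> + 1" using szp by (simp add: N_def)
    have Ngt: "sz x / r < real N" using N1 ceiling_correct[of "sz x / r"] by linarith
    have Npos: "real N > 0" using Ngt szp by linarith
    have Nle: "real N \<le> sz x / r + 2" using N1 ceiling_correct[of "sz x / r"] by linarith
    have szlt: "sz x < r * real N" using Ngt r by (simp add: divide_less_eq mult.commute)
    define a where "a = n1 / real N"
    define b where "b = n2 / real N"
    define s where "s = t / real N"
    have sab: "sz (0,a,b) < r"
    proof -
      have "sz (0,a,b) = (\<bar>n1\<bar> + \<bar>n2\<bar>) / real N" using Npos by (simp add: sz_def a_def b_def add_divide_distrib)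
      also have "\<dots> \<le> sz x / real N" using Npos by (simp add: sz_def x divide_right_mono)
      also have "\<dots> < r" using szlt Npos by (simp add: divide_less_eq mult.commute)
      finally show ?thesis .
    qed
    have ss: "sz (s,0,0) < r"
    proof -
      have "sz (s,0,0) = \<bar>t\<bar> / real N" using Npos by (simp add: sz_def s_def)
      also have "\<dots> \<le> sz x / real N" using Npos by (simp add: sz_def x divide_right_mono)
      also have "\<dots> < r" using szlt Npos by (simp add: divide_less_eq mult.commute)
      finally show ?thesis .
    qed
    have m1: "(0,a,b) \<in> U \<inter> Nsub" using inU[OF sab] by (simp add: Nsub_def)
    have m2: "(0,a,b) \<in> U" using m1 by simp
    have e1: "(0, real N * a, real N * b) = (0, n1, n2)" using Npos by (simp add: a_def b_def)
    have pN: "(0, n1, n2) \<in> setpow (U \<inter> Nsub) N" using pow_N[OF m1, of N] e1 by simp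
    have pU: "(0, n1, n2) \<in> setpow U N" using pow_N[OF m2, of N] e1 by simp
    have "(fst (0::real,n1,n2) + real N * s, snd (0::real,n1,n2)) \<in> setpow U (N + N)"
      by (rule pow_T[OF pU inU[OF ss]])
    then have px: "x \<in> setpow U (N + N)" using Npos by (simp add: s_def x)
    have lG: "lenG U x \<le> N + N" unfolding lenG_def by (rule Least_le[where P="\<lambda>j. x \<in> setpow U j", OF px])
    have lN: "lenN U (0, snd x) \<le> N" unfolding lenN_def x snd_conv
      by (rule Least_le[where P="\<lambda>j. (0, n1, n2) \<in> setpow (U \<inter> Nsub) j", OF pN])
    have "real (N + N) \<le> c * (1 + sz x)"
    proof -
      have "real (N + N) \<le> 2 * (sz x / r + 2)" using Nle by simp
      also have "\<dots> = (2 / r) * sz x + 4" by (simp add: algebra_simps)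
      also have "\<dots> \<le> c * (1 + sz x)"
      proof -
        have "c * (1 + sz x) = (2 / r) * sz x + 4 + (2 / r + 4 * sz x)" by (simp add: c_def algebra_simps add_divide_distrib)
        then show ?thesis using sz_nonneg[of x] \<open>2 / r > 0\<close> by linarith
      qed
      finally show ?thesis .
    qed
    moreover have "real N \<le> real (N + N)" by simp
    ultimately show ?thesis using px lG lN
      by (meson le_trans of_nat_le_iff order_trans)
  qed
  then show ?thesis using c by blast
qed

lemma trig_abs: "\<bar>u * cos t\<bar> \<le> \<bar>u::real\<bar>" "\<bar>u * sin t\<bar> \<le> \<bar>u\<bar>"
  using abs_sin_le_one[of t] abs_cos_le_one[of t]
  by (auto simp: abs_mult intro!: mult_left_le)

lemma onorm_Ad_inv_le: "onorm (Ad (ginv g)) \<le> 5 + 2 * sz g"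
proof -
  obtain t n1 n2 where g: "g = (t,n1,n2)" by (cases g)
  have "onorm (Ad (ginv g)) \<le> 5 + \<bar>fst (snd (ginv g))\<bar> + \<bar>snd (snd (ginv g))\<bar>" by (rule onorm_Ad_le)
  moreover have "\<bar>fst (snd (ginv g))\<bar> \<le> \<bar>n1\<bar> + \<bar>n2\<bar>"
    using trig_abs[of n1 t] trig_abs[of n2 t] by (simp add: ginv_eq g) linarith
  moreover have "\<bar>snd (snd (ginv g))\<bar> \<le> \<bar>n1\<bar> + \<bar>n2\<bar>"
    using trig_abs[of n1 t] trig_abs[of n2 t] by (simp add: ginv_eq g) linarith
  ultimately show ?thesis using abs_ge_zero[of t] by (simp add: sz_def g) linarith
qed

lemma sigma_bounds:
  assumes "compact U" "0 \<in> interior U"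
  shows "\<exists>C1 C2. C1 > 0 \<and> C2 > 0 \<and> (\<forall>x. 1 \<le> sigma U x \<and> 1 + sz x \<le> C1 * sigma U x \<and> sigma U x \<le> C2 * (1 + sz x)^2)"
proof -
  obtain c where c: "c > 0" "\<And>x. (\<exists>j. x \<in> setpow U j) \<and> real (lenG U x) \<le> c * (1 + sz x) \<and> real (lenN U (0, snd x)) \<le> c * (1 + sz x)"
    using len_bounds[OF assms(2)] by blast
  obtain B where B: "\<And>u. u \<in> U \<Longrightarrow> norm u \<le> B"
    using compact_imp_bounded[OF assms(1)] by (auto simp: bounded_iff)
  define K where "K = 3 * \<bar>B\<bar>"
  have K: "K \<ge> 0" by (simp add: K_def)
  have szK: "sz u \<le> K" if "u \<in> U" for u
    using sz_le_norm[of u] B[OF that] abs_ge_self[of B] unfolding K_def by linarith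
  define C1 where "C1 = 1 + 2 * K"
  define C2 where "C2 = 5 * (1 + 2 * c)"
  have "1 \<le> sigma U x \<and> 1 + sz x \<le> C1 * sigma U x \<and> sigma U x \<le> C2 * (1 + sz x)^2" for x
  proof -
    define M where "M = max (onorm (Ad x)) (onorm (Ad (ginv x)))"
    define lG where "lG = real (lenG U x)"
    define lN where "lN = real (lenN U (0, snd x))"
    have sig: "sigma U x = M * (1 + lG + lN)" by (simp add: sigma_def M_def lG_def lN_def)
    have M1: "M \<ge> 1" using onorm_Ad_ge[of x] by (simp add: M_def)
    have lG0: "lG \<ge> 0" "lN \<ge> 0" by (simp_all add: lG_def lN_def)
    have mem: "x \<in> setpow U (lenG U x)"
      unfolding lenG_def using c(2)[of x] by (auto intro: LeastI_ex)
    have szG: "sz x \<le> 2 * K * lG" using setpow_sz[OF szK mem] by (simp add: lG_def)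
    have s1: "1 \<le> sigma U x"
    proof -
      have "1 * 1 \<le> M * (1 + lG + lN)" using M1 lG0 by (intro mult_mono) auto
      then show ?thesis by (simp add: sig)
    qed
    have s2: "1 + sz x \<le> C1 * sigma U x"
    proof -
      have "1 + sz x \<le> C1 * (1 + lG + lN)"
        using szG lG0 K by (simp add: C1_def algebra_simps) (smt (verit) mult_nonneg_nonneg)
      also have "\<dots> \<le> C1 * (M * (1 + lG + lN))"
      proof (rule mult_left_mono)
        show "1 + lG + lN \<le> M * (1 + lG + lN)" using M1 lG0 by (simp add: mult_le_cancel_right1)
      qed (use K in \<open>simp add: C1_def\<close>)
      finally show ?thesis by (simp add: sig)
    qed
    have s3: "sigma U x \<le> C2 * (1 + sz x)^2"
    proof -
      have M5: "M \<le> 5 * (1 + sz x)"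
        using onorm_Ad_le[of x] onorm_Ad_inv_le[of x] sz_nonneg[of x]
        by (simp add: M_def sz_def) linarith
      have L: "1 + lG + lN \<le> (1 + 2 * c) * (1 + sz x)"
        using c(2)[of x] sz_nonneg[of x] c(1) by (simp add: lG_def lN_def algebra_simps)
      have "M * (1 + lG + lN) \<le> (5 * (1 + sz x)) * ((1 + 2 * c) * (1 + sz x))"
        using M5 L M1 lG0 by (intro mult_mono) auto
      then show ?thesis by (simp add: sig C2_def power2_eq_square algebra_simps)
    qed
    show ?thesis using s1 s2 s3 by blast
  qed
  moreover have "C1 > 0" "C2 > 0" using K c(1) by (simp_all add: C1_def C2_def)
  ultimately show ?thesis by blast
qed

definition R :: "pt \<Rightarrow> real" where "R x = 1 + sz x"

lemma monom_le: "\<bar>monom (b1,b2,b3) x\<bar> \<le> R x ^ (b1 + b2 + b3)"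
proof -
  obtain t n1 n2 where x: "x = (t,n1,n2)" by (cases x)
  have a: "\<bar>t\<bar> \<le> R x" "\<bar>n1\<bar> \<le> R x" "\<bar>n2\<bar> \<le> R x" by (auto simp: R_def sz_def x)
  have "\<bar>monom (b1,b2,b3) x\<bar> = \<bar>t\<bar>^b1 * \<bar>n1\<bar>^b2 * \<bar>n2\<bar>^b3" by (simp add: monom_def x abs_mult power_abs)
  also have "\<dots> \<le> R x ^ b1 * R x ^ b2 * R x ^ b3"
    using a by (intro mult_mono power_mono) auto
  also have "\<dots> = R x ^ (b1 + b2 + b3)" by (simp add: power_add)
  finally show ?thesis .
qed

lemma R_pow_le: "R x ^ m \<le> 4 ^ m * (\<Sum>\<gamma>\<leftarrow>[(0,0,0),(m,0,0),(0,m,0),(0,0,m)]. \<bar>monom \<gamma> x\<bar>)"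
proof -
  obtain t n1 n2 where x: "x = (t,n1,n2)" by (cases x)
  define Mx where "Mx = max (max 1 \<bar>t\<bar>) (max \<bar>n1\<bar> \<bar>n2\<bar>)"
  have "1 \<le> Mx" "\<bar>t\<bar> \<le> Mx" "\<bar>n1\<bar> \<le> Mx" "\<bar>n2\<bar> \<le> Mx" by (auto simp: Mx_def)
  then have "R x \<le> 4 * Mx" by (simp add: R_def sz_def x)
  then have "R x ^ m \<le> (4 * Mx) ^ m" by (intro power_mono) (auto simp: R_def sz_def x)
  also have "\<dots> = 4 ^ m * Mx ^ m" by (simp add: power_mult_distrib)
  also have "Mx ^ m \<le> 1 + \<bar>t\<bar> ^ m + \<bar>n1\<bar> ^ m + \<bar>n2\<bar> ^ m"
  proof -
    have "Mx = 1 \<or> Mx = \<bar>t\<bar> \<or> Mx = \<bar>n1\<bar> \<or> Mx = \<bar>n2\<bar>" by (auto simp: Mx_def max_def)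
    moreover have "0 \<le> \<bar>t\<bar> ^ m" "0 \<le> \<bar>n1\<bar> ^ m" "0 \<le> \<bar>n2\<bar> ^ m" by auto
    ultimately show ?thesis by auto
  qed
  then have "4 ^ m * Mx ^ m \<le> 4 ^ m * (1 + \<bar>t\<bar> ^ m + \<bar>n1\<bar> ^ m + \<bar>n2\<bar> ^ m)" by simp
  also have "\<dots> = 4 ^ m * (\<Sum>\<gamma>\<leftarrow>[(0,0,0),(m,0,0),(0,m,0),(0,0,m)]. \<bar>monom \<gamma> x\<bar>)"
    by (simp add: monom_def x power_abs)
  finally show ?thesis .
qed

lemma pds_diff:
  assumes g: "smooth g" and f: "smooth f"
  shows "set w \<subseteq> {0,1,2} \<Longrightarrow> pds w (\<lambda>x. g x - f x) = (\<lambda>x. pds w g x - pds w f x)"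
proof (induction w)
  case Nil then show ?case by simp
next
  case (Cons i w)
  then have IH: "pds w (\<lambda>x. g x - f x) = (\<lambda>x. pds w g x - pds w f x)" and i: "i \<in> {0,1,2}"
    and w: "set w \<subseteq> {0,1,2}" by auto
  have "pds (i # w) (\<lambda>x. g x - f x) = pd i (\<lambda>x. pds w g x - pds w f x)" using IH by simp
  also have "\<dots> = (\<lambda>x. pds (i # w) g x - pds (i # w) f x)"
  proof
    fix x
    have dg: "(\<lambda>h. pds w g (x + h *\<^sub>R ev i)) differentiable (at 0)"
      using smooth_d[OF pds_smooth[OF g w] i] .
    have df: "(\<lambda>h. pds w f (x + h *\<^sub>R ev i)) differentiable (at 0)"
      using smooth_d[OF pds_smooth[OF f w] i] .
    show "pd i (\<lambda>x. pds w g x - pds w f x) x = pds (i # w) g x - pds (i # w) f x"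
      using pd_diff[OF dg df] by simp
  qed
  finally show ?case .
qed

lemma smooth_diff:
  assumes g: "smooth g" and f: "smooth f"
  shows "smooth (\<lambda>x. g x - f x)"
  unfolding smooth_def
proof (intro allI impI conjI ballI)
  fix w :: "nat list" assume w: "set w \<subseteq> {0,1,2}"
  have e: "pds w (\<lambda>x. g x - f x) = (\<lambda>x. pds w g x - pds w f x)" by (rule pds_diff[OF g f w])
  show "continuous_on UNIV (pds w (\<lambda>x. g x - f x))"
    unfolding e using smooth_pds[OF g w] smooth_pds[OF f w] by (auto intro: continuous_on_diff)
  fix i x assume i: "i \<in> {0::nat,1,2}"
  show "(\<lambda>h. pds w (\<lambda>x. g x - f x) (x + h *\<^sub>R ev i)) differentiable (at 0)"
    unfolding e using smooth_d[OF pds_smooth[OF g w] i] smooth_d[OF pds_smooth[OF f w] i]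
    by (intro differentiable_diff)
qed

lemma pdalpha_diff:
  assumes g: "smooth g" and f: "smooth f"
  shows "pdalpha \<alpha> (\<lambda>x. g x - f x) x = pdalpha \<alpha> g x - pdalpha \<alpha> f x"
proof -
  obtain a b c where \<alpha>: "\<alpha> = (a,b,c)" by (cases \<alpha>)
  have w: "set (replicate a 0 @ replicate b 1 @ replicate c (2::nat)) \<subseteq> {0,1,2}"
    by (auto simp: set_replicate_conv_if)
  show ?thesis unfolding \<alpha> pdalpha_pds pds_diff[OF g f w] ..
qed

lemma sum_list_mult:
  "(\<Sum>a\<leftarrow>A. f a) * (\<Sum>b\<leftarrow>B. g b) = (\<Sum>(a,b)\<leftarrow>List.product A B. (f a * g b :: real))"
proof (induction A)
  case Nil then show ?case by simp
next
  case (Cons a A)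
  have "(\<Sum>a\<leftarrow>a # A. f a) * (\<Sum>b\<leftarrow>B. g b) = f a * (\<Sum>b\<leftarrow>B. g b) + (\<Sum>a\<leftarrow>A. f a) * (\<Sum>b\<leftarrow>B. g b)"
    by (simp add: algebra_simps)
  also have "f a * (\<Sum>b\<leftarrow>B. g b) = (\<Sum>b\<leftarrow>B. f a * g b)" by (simp add: sum_list_const_mult)
  finally show ?case using Cons by (simp add: o_def)
qed

lemma sum_list_nonneg': "(\<And>x. x \<in> set L \<Longrightarrow> 0 \<le> f x) \<Longrightarrow> 0 \<le> (\<Sum>x\<leftarrow>L. f x :: real)"
  by (induction L) auto

lemma PW1:
  assumes "compact U" "0 \<in> interior U"
  shows "\<exists>D Q. D \<ge> 0 \<and> (\<forall>h. smooth h \<longrightarrow> (\<forall>x. sigma U x ^ k * norm (Xalpha \<alpha> h x) \<le>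
            D * (\<Sum>(\<beta>,\<gamma>)\<leftarrow>Q. \<bar>monom \<gamma> x\<bar> * norm (pdalpha \<beta> h x))))"
proof -
  obtain C1 C2 where C: "C1 > 0" "C2 > 0" "\<And>x. 1 \<le> sigma U x \<and> 1 + sz x \<le> C1 * sigma U x \<and> sigma U x \<le> C2 * (1 + sz x)^2"
    using sigma_bounds[OF assms] by blast
  obtain L C where L: "C \<ge> 0" "\<forall>\<phi>. smooth \<phi> \<longrightarrow> (\<forall>x. norm (Xalpha \<alpha> \<phi> x) \<le> C * (\<Sum>\<beta>\<leftarrow>L. norm (pdalpha \<beta> \<phi> x)))"
    using X_bound by blast
  define G where "G = [(0::nat,0::nat,0::nat),(2*k,0,0),(0,2*k,0),(0,0,2*k)]"
  define D where "D = C2 ^ k * 4 ^ (2*k) * C"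
  have D: "D \<ge> 0" using C L by (simp add: D_def)
  have "sigma U x ^ k * norm (Xalpha \<alpha> h x) \<le> D * (\<Sum>(\<beta>,\<gamma>)\<leftarrow>List.product L G. \<bar>monom \<gamma> x\<bar> * norm (pdalpha \<beta> h x))"
    if h: "smooth h" for h x
  proof -
    have s0: "0 \<le> sigma U x" using C(3)[of x] by linarith
    have "sigma U x ^ k \<le> (C2 * R x ^ 2) ^ k"
      using C(3)[of x] s0 by (intro power_mono) (auto simp: R_def)
    also have "\<dots> = C2 ^ k * R x ^ (2 * k)" by (simp add: power_mult_distrib power_mult)
    also have "\<dots> \<le> C2 ^ k * (4 ^ (2*k) * (\<Sum>\<gamma>\<leftarrow>G. \<bar>monom \<gamma> x\<bar>))"
      using C(2) unfolding G_def by (intro mult_left_mono R_pow_le) auto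
    finally have a: "sigma U x ^ k \<le> C2 ^ k * 4 ^ (2*k) * (\<Sum>\<gamma>\<leftarrow>G. \<bar>monom \<gamma> x\<bar>)" by (simp add: mult.assoc)
    have b: "norm (Xalpha \<alpha> h x) \<le> C * (\<Sum>\<beta>\<leftarrow>L. norm (pdalpha \<beta> h x))" using L(2) h by blast
    have "sigma U x ^ k * norm (Xalpha \<alpha> h x) \<le> (C2 ^ k * 4 ^ (2*k) * (\<Sum>\<gamma>\<leftarrow>G. \<bar>monom \<gamma> x\<bar>)) * (C * (\<Sum>\<beta>\<leftarrow>L. norm (pdalpha \<beta> h x)))"
      by (rule mult_mono[OF a b]) (use C(2) in \<open>auto intro!: mult_nonneg_nonneg sum_list_nonneg'\<close>)
    also have "\<dots> = D * ((\<Sum>\<beta>\<leftarrow>L. norm (pdalpha \<beta> h x)) * (\<Sum>\<gamma>\<leftarrow>G. \<bar>monom \<gamma> x\<bar>))"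
      by (simp add: D_def algebra_simps)
    also have "(\<Sum>\<beta>\<leftarrow>L. norm (pdalpha \<beta> h x)) * (\<Sum>\<gamma>\<leftarrow>G. \<bar>monom \<gamma> x\<bar>) =
        (\<Sum>(\<beta>,\<gamma>)\<leftarrow>List.product L G. norm (pdalpha \<beta> h x) * \<bar>monom \<gamma> x\<bar>)"
      by (rule sum_list_mult)
    also have "\<dots> = (\<Sum>(\<beta>,\<gamma>)\<leftarrow>List.product L G. \<bar>monom \<gamma> x\<bar> * norm (pdalpha \<beta> h x))"
      by (simp add: mult.commute case_prod_beta)
    finally show ?thesis .
  qed
  then show ?thesis using D by blast
qed

lemma PW2:
  assumes "compact U" "0 \<in> interior U"
  shows "\<exists>D Q. D \<ge> 0 \<and> (\<forall>h. smooth h \<longrightarrow> (\<forall>x. \<bar>monom \<gamma> x\<bar> * norm (pdalpha \<beta> h x) \<le>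
            D * (\<Sum>(k,\<alpha>)\<leftarrow>Q. sigma U x ^ k * norm (Xalpha \<alpha> h x))))"
proof -
  obtain C1 C2 where C: "C1 > 0" "C2 > 0" "\<And>x. 1 \<le> sigma U x \<and> 1 + sz x \<le> C1 * sigma U x \<and> sigma U x \<le> C2 * (1 + sz x)^2"
    using sigma_bounds[OF assms] by blast
  obtain L C where L: "C \<ge> 0" "\<forall>\<phi>. smooth \<phi> \<longrightarrow> (\<forall>x. norm (pdalpha \<beta> \<phi> x) \<le> C * (\<Sum>\<alpha>\<leftarrow>L. norm (Xalpha \<alpha> \<phi> x)))"
    using pd_bound by blast
  obtain g1 g2 g3 where \<gamma>: "\<gamma> = (g1,g2,g3)" by (cases \<gamma>)
  define m where "m = g1 + g2 + g3"
  define D where "D = C1 ^ m * C"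
  have D: "D \<ge> 0" using C L by (simp add: D_def)
  have "\<bar>monom \<gamma> x\<bar> * norm (pdalpha \<beta> h x) \<le> D * (\<Sum>(k,\<alpha>)\<leftarrow>map (\<lambda>\<alpha>. (m,\<alpha>)) L. sigma U x ^ k * norm (Xalpha \<alpha> h x))"
    if h: "smooth h" for h x
  proof -
    have "\<bar>monom \<gamma> x\<bar> \<le> R x ^ m" using monom_le by (simp add: \<gamma> m_def)
    also have "\<dots> \<le> (C1 * sigma U x) ^ m"
      using C(3)[of x] by (intro power_mono) (auto simp: R_def sz_nonneg add_nonneg_nonneg)
    finally have a: "\<bar>monom \<gamma> x\<bar> \<le> C1 ^ m * sigma U x ^ m" by (simp add: power_mult_distrib)
    have b: "norm (pdalpha \<beta> h x) \<le> C * (\<Sum>\<alpha>\<leftarrow>L. norm (Xalpha \<alpha> h x))" using L(2) h by blast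
    have "\<bar>monom \<gamma> x\<bar> * norm (pdalpha \<beta> h x) \<le> (C1 ^ m * sigma U x ^ m) * (C * (\<Sum>\<alpha>\<leftarrow>L. norm (Xalpha \<alpha> h x)))"
      by (rule mult_mono[OF a b]) (use C(1) C(3)[of x] in \<open>auto\<close>)
    also have "\<dots> = D * (sigma U x ^ m * (\<Sum>\<alpha>\<leftarrow>L. norm (Xalpha \<alpha> h x)))"
      by (simp add: D_def algebra_simps)
    also have "sigma U x ^ m * (\<Sum>\<alpha>\<leftarrow>L. norm (Xalpha \<alpha> h x)) = (\<Sum>\<alpha>\<leftarrow>L. sigma U x ^ m * norm (Xalpha \<alpha> h x))"
      by (simp add: sum_list_const_mult)
    also have "\<dots> = (\<Sum>(k,\<alpha>)\<leftarrow>map (\<lambda>\<alpha>. (m,\<alpha>)) L. sigma U x ^ k * norm (Xalpha \<alpha> h x))"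
      by (simp add: o_def)
    finally show ?thesis .
  qed
  then show ?thesis using D by blast
qed

lemma sup_dom:
  fixes f :: "pt \<Rightarrow> real" and g :: "'i \<Rightarrow> pt \<Rightarrow> real"
  assumes dom: "\<And>x. f x \<le> D * (\<Sum>i\<leftarrow>Q. g i x)" and D: "D \<ge> 0"
    and bdd: "\<And>i. i \<in> set Q \<Longrightarrow> bdd_above (range (g i))"
  shows "bdd_above (range f) \<and> (SUP x. f x) \<le> D * (\<Sum>i\<leftarrow>Q. (SUP x. g i x))"
proof -
  have le: "f x \<le> D * (\<Sum>i\<leftarrow>Q. (SUP x. g i x))" for x
  proof -
    have "(\<Sum>i\<leftarrow>Q. g i x) \<le> (\<Sum>i\<leftarrow>Q. (SUP x. g i x))"
      by (rule sum_list_mono) (use bdd in \<open>auto intro: cSUP_upper\<close>)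
    then show ?thesis using dom[of x] D by (meson mult_left_mono order_trans)
  qed
  show ?thesis
  proof
    show "bdd_above (range f)" by (rule bdd_aboveI2, rule le)
    show "(SUP x. f x) \<le> D * (\<Sum>i\<leftarrow>Q. (SUP x. g i x))" using le by (auto intro: cSUP_least)
  qed
qed

definition qsem :: "(nat \<times> nat \<times> nat) \<Rightarrow> (nat \<times> nat \<times> nat) \<Rightarrow> (pt \<Rightarrow> complex) \<Rightarrow> real" where
  "qsem \<beta> \<gamma> f = (SUP x. \<bar>monom \<gamma> x\<bar> * norm (pdalpha \<beta> f x))"

definition psem :: "pt set \<Rightarrow> nat \<Rightarrow> (nat \<times> nat \<times> nat) \<Rightarrow> (pt \<Rightarrow> complex) \<Rightarrow> real" where
  "psem U k \<alpha> f = (SUP x. sigma U x ^ k * norm (Xalpha \<alpha> f x))"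

lemma dom1:
  assumes "compact U" "0 \<in> interior U"
  shows "\<exists>D Q. D \<ge> 0 \<and> (\<forall>h. smooth h \<longrightarrow> (\<forall>\<beta> \<gamma>. bdd_above (range (\<lambda>x. \<bar>monom \<gamma> x\<bar> * norm (pdalpha \<beta> h x)))) \<longrightarrow>
      bdd_above (range (\<lambda>x. sigma U x ^ k * norm (Xalpha \<alpha> h x))) \<and>
      psem U k \<alpha> h \<le> D * (\<Sum>(\<beta>,\<gamma>)\<leftarrow>Q. qsem \<beta> \<gamma> h))"
proof -
  obtain D Q where DQ: "D \<ge> 0" "\<And>h x. smooth h \<Longrightarrow> sigma U x ^ k * norm (Xalpha \<alpha> h x) \<le>
            D * (\<Sum>(\<beta>,\<gamma>)\<leftarrow>Q. \<bar>monom \<gamma> x\<bar> * norm (pdalpha \<beta> h x))"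
    using PW1[OF assms, of k \<alpha>] by blast
  have "bdd_above (range (\<lambda>x. sigma U x ^ k * norm (Xalpha \<alpha> h x))) \<and>
      psem U k \<alpha> h \<le> D * (\<Sum>(\<beta>,\<gamma>)\<leftarrow>Q. qsem \<beta> \<gamma> h)"
    if h: "smooth h" and b: "\<forall>\<beta> \<gamma>. bdd_above (range (\<lambda>x. \<bar>monom \<gamma> x\<bar> * norm (pdalpha \<beta> h x)))" for h
  proof -
    have "bdd_above (range (\<lambda>x. sigma U x ^ k * norm (Xalpha \<alpha> h x))) \<and>
      (SUP x. sigma U x ^ k * norm (Xalpha \<alpha> h x)) \<le> D * (\<Sum>i\<leftarrow>Q. (SUP x. (case i of (\<beta>,\<gamma>) \<Rightarrow> \<bar>monom \<gamma> x\<bar> * norm (pdalpha \<beta> h x))))"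
    proof (rule sup_dom[OF _ DQ(1)])
      fix x show "sigma U x ^ k * norm (Xalpha \<alpha> h x) \<le> D * (\<Sum>i\<leftarrow>Q. (case i of (\<beta>,\<gamma>) \<Rightarrow> \<bar>monom \<gamma> x\<bar> * norm (pdalpha \<beta> h x)))"
        using DQ(2)[OF h, of x] by simp
    next
      fix i :: "(nat \<times> nat \<times> nat) \<times> (nat \<times> nat \<times> nat)"
      show "bdd_above (range (\<lambda>x. case i of (\<beta>,\<gamma>) \<Rightarrow> \<bar>monom \<gamma> x\<bar> * norm (pdalpha \<beta> h x)))"
        using b[rule_format, of "snd i" "fst i"] by (simp add: case_prod_beta)
    qed
    moreover have "(\<Sum>i\<leftarrow>Q. (SUP x. (case i of (\<beta>,\<gamma>) \<Rightarrow> \<bar>monom \<gamma> x\<bar> * norm (pdalpha \<beta> h x)))) = (\<Sum>(\<beta>,\<gamma>)\<leftarrow>Q. qsem \<beta> \<gamma> h)"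
      by (rule arg_cong[where f=sum_list], rule map_cong) (auto simp: qsem_def split: prod.split)
    ultimately show ?thesis by (simp add: psem_def)
  qed
  then show ?thesis using DQ(1) by blast
qed

lemma dom2:
  assumes "compact U" "0 \<in> interior U"
  shows "\<exists>D Q. D \<ge> 0 \<and> (\<forall>h. smooth h \<longrightarrow> (\<forall>k \<alpha>. bdd_above (range (\<lambda>x. sigma U x ^ k * norm (Xalpha \<alpha> h x)))) \<longrightarrow>
      bdd_above (range (\<lambda>x. \<bar>monom \<gamma> x\<bar> * norm (pdalpha \<beta> h x))) \<and>
      qsem \<beta> \<gamma> h \<le> D * (\<Sum>(k,\<alpha>)\<leftarrow>Q. psem U k \<alpha> h))"
proof -
  obtain D Q where DQ: "D \<ge> 0" "\<And>h x. smooth h \<Longrightarrow> \<bar>monom \<gamma> x\<bar> * norm (pdalpha \<beta> h x) \<le>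
            D * (\<Sum>(k,\<alpha>)\<leftarrow>Q. sigma U x ^ k * norm (Xalpha \<alpha> h x))"
    using PW2[OF assms, of \<gamma> \<beta>] by blast
  have "bdd_above (range (\<lambda>x. \<bar>monom \<gamma> x\<bar> * norm (pdalpha \<beta> h x))) \<and>
      qsem \<beta> \<gamma> h \<le> D * (\<Sum>(k,\<alpha>)\<leftarrow>Q. psem U k \<alpha> h)"
    if h: "smooth h" and b: "\<forall>k \<alpha>. bdd_above (range (\<lambda>x. sigma U x ^ k * norm (Xalpha \<alpha> h x)))" for h
  proof -
    have "bdd_above (range (\<lambda>x. \<bar>monom \<gamma> x\<bar> * norm (pdalpha \<beta> h x))) \<and>
      (SUP x. \<bar>monom \<gamma> x\<bar> * norm (pdalpha \<beta> h x)) \<le> D * (\<Sum>i\<leftarrow>Q. (SUP x. (case i of (k,\<alpha>) \<Rightarrow> sigma U x ^ k * norm (Xalpha \<alpha> h x))))"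
    proof (rule sup_dom[OF _ DQ(1)])
      fix x show "\<bar>monom \<gamma> x\<bar> * norm (pdalpha \<beta> h x) \<le> D * (\<Sum>i\<leftarrow>Q. (case i of (k,\<alpha>) \<Rightarrow> sigma U x ^ k * norm (Xalpha \<alpha> h x)))"
        using DQ(2)[OF h, of x] by simp
    next
      fix i :: "nat \<times> nat \<times> nat \<times> nat"
      show "bdd_above (range (\<lambda>x. case i of (k,\<alpha>) \<Rightarrow> sigma U x ^ k * norm (Xalpha \<alpha> h x)))"
        using b[rule_format, of "fst i" "snd i"] by (simp add: case_prod_beta)
    qed
    moreover have "(\<Sum>i\<leftarrow>Q. (SUP x. (case i of (k,\<alpha>) \<Rightarrow> sigma U x ^ k * norm (Xalpha \<alpha> h x)))) = (\<Sum>(k,\<alpha>)\<leftarrow>Q. psem U k \<alpha> h)"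
      by (rule arg_cong[where f=sum_list], rule map_cong) (auto simp: psem_def split: prod.split)
    ultimately show ?thesis by (simp add: qsem_def)
  qed
  then show ?thesis using DQ(1) by blast
qed

lemma Ssigma_eq:
  assumes "compact U" "0 \<in> interior U"
  shows "Ssigma U = Schwartz"
proof (intro set_eqI iffI)
  fix \<phi> assume "\<phi> \<in> Ssigma U"
  then have s: "smooth \<phi>" and b: "\<forall>k \<alpha>. bdd_above (range (\<lambda>g. sigma U g ^ k * norm (Xalpha \<alpha> \<phi> g)))"
    by (auto simp: Ssigma_def)
  have "bdd_above (range (\<lambda>x. \<bar>monom \<beta> x\<bar> * norm (pdalpha \<alpha> \<phi> x)))" for \<alpha> \<beta>
  proof -
    obtain D Q where H: "\<forall>h. smooth h \<longrightarrow> (\<forall>k \<alpha>. bdd_above (range (\<lambda>x. sigma U x ^ k * norm (Xalpha \<alpha> h x)))) \<longrightarrow>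
      bdd_above (range (\<lambda>x. \<bar>monom \<beta> x\<bar> * norm (pdalpha \<alpha> h x))) \<and>
      qsem \<alpha> \<beta> h \<le> D * (\<Sum>(k,\<alpha>)\<leftarrow>Q. psem U k \<alpha> h)"
      using dom2[OF assms, of \<beta> \<alpha>] by (elim exE conjE)
    show ?thesis using mp[OF mp[OF spec[OF H, of \<phi>] s] b] by (rule conjunct1)
  qed
  then show "\<phi> \<in> Schwartz" using s by (auto simp: Schwartz_def)
next
  fix \<phi> assume "\<phi> \<in> Schwartz"
  then have s: "smooth \<phi>" and b: "\<forall>\<alpha> \<beta>. bdd_above (range (\<lambda>x. \<bar>monom \<beta> x\<bar> * norm (pdalpha \<alpha> \<phi> x)))"
    by (auto simp: Schwartz_def)
  have "bdd_above (range (\<lambda>g. sigma U g ^ k * norm (Xalpha \<alpha> \<phi> g)))" for k \<alpha>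
  proof -
    obtain D Q where H: "\<forall>h. smooth h \<longrightarrow> (\<forall>\<beta> \<gamma>. bdd_above (range (\<lambda>x. \<bar>monom \<gamma> x\<bar> * norm (pdalpha \<beta> h x)))) \<longrightarrow>
      bdd_above (range (\<lambda>x. sigma U x ^ k * norm (Xalpha \<alpha> h x))) \<and>
      psem U k \<alpha> h \<le> D * (\<Sum>(\<beta>,\<gamma>)\<leftarrow>Q. qsem \<beta> \<gamma> h)"
      using dom1[OF assms, of k \<alpha>] by (elim exE conjE)
    show ?thesis using mp[OF mp[OF spec[OF H, of \<phi>] s] b] by (rule conjunct1)
  qed
  then show "\<phi> \<in> Ssigma U" using s by (auto simp: Ssigma_def)
qed

lemma Schwartz_diff:
  assumes g: "g \<in> Schwartz" and f: "f \<in> Schwartz"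
  shows "(\<lambda>x. g x - f x) \<in> Schwartz"
proof -
  have sg: "smooth g" and bg: "\<And>\<alpha> \<beta>. bdd_above (range (\<lambda>x. \<bar>monom \<beta> x\<bar> * norm (pdalpha \<alpha> g x)))"
    using g by (auto simp: Schwartz_def)
  have sf: "smooth f" and bf: "\<And>\<alpha> \<beta>. bdd_above (range (\<lambda>x. \<bar>monom \<beta> x\<bar> * norm (pdalpha \<alpha> f x)))"
    using f by (auto simp: Schwartz_def)
  have "bdd_above (range (\<lambda>x. \<bar>monom \<beta> x\<bar> * norm (pdalpha \<alpha> (\<lambda>x. g x - f x) x)))" for \<alpha> \<beta>
  proof -
    obtain Bg where Bg: "\<And>x. \<bar>monom \<beta> x\<bar> * norm (pdalpha \<alpha> g x) \<le> Bg"
      using bg[of \<beta> \<alpha>] by (auto simp: bdd_above_def)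
    obtain Bf where Bf: "\<And>x. \<bar>monom \<beta> x\<bar> * norm (pdalpha \<alpha> f x) \<le> Bf"
      using bf[of \<beta> \<alpha>] by (auto simp: bdd_above_def)
    have "\<bar>monom \<beta> x\<bar> * norm (pdalpha \<alpha> (\<lambda>x. g x - f x) x) \<le> Bg + Bf" for x
    proof -
      have "\<bar>monom \<beta> x\<bar> * norm (pdalpha \<alpha> (\<lambda>x. g x - f x) x) = \<bar>monom \<beta> x\<bar> * norm (pdalpha \<alpha> g x - pdalpha \<alpha> f x)"
        by (simp add: pdalpha_diff[OF sg sf])
      also have "\<dots> \<le> \<bar>monom \<beta> x\<bar> * (norm (pdalpha \<alpha> g x) + norm (pdalpha \<alpha> f x))"
        by (intro mult_left_mono norm_triangle_ineq4) simp
      also have "\<dots> \<le> Bg + Bf" using Bg[of x] Bf[of x] by (simp add: algebra_simps)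
      finally show ?thesis .
    qed
    then show ?thesis by (rule bdd_aboveI2)
  qed
  then show ?thesis using smooth_diff[OF sg sf] by (auto simp: Schwartz_def)
qed

lemma sum_list_le_len: "(\<And>x. x \<in> set L \<Longrightarrow> f x \<le> c) \<Longrightarrow> (\<Sum>x\<leftarrow>L. f x) \<le> real (length L) * (c::real)"
  by (induction L) (auto simp: algebra_simps add_mono)

lemma topo_open:
  fixes S :: "('a \<Rightarrow> 'b::ab_group_add) set" and P Q :: "(('a \<Rightarrow> 'b) \<Rightarrow> real) set"
  assumes d1: "\<And>p. p \<in> P \<Longrightarrow> \<exists>D qs. D \<ge> 0 \<and> set qs \<subseteq> Q \<and>
      (\<forall>g\<in>S. \<forall>f\<in>S. p (\<lambda>x. g x - f x) \<le> D * (\<Sum>q\<leftarrow>qs. q (\<lambda>x. g x - f x)))"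
    and V: "seminorm_open S P V"
  shows "seminorm_open S Q V"
  unfolding seminorm_open_def
proof (intro conjI ballI)
  show VS: "V \<subseteq> S" using V by (simp add: seminorm_open_def)
  fix f assume fV: "f \<in> V"
  then have fS: "f \<in> S" using VS by blast
  obtain F \<epsilon> where F: "finite F" "F \<subseteq> P" "\<epsilon> > 0" "{g \<in> S. \<forall>p \<in> F. p (\<lambda>x. g x - f x) < \<epsilon>} \<subseteq> V"
    using V fV unfolding seminorm_open_def by blast
  have "\<forall>p\<in>F. \<exists>Dq. fst Dq \<ge> 0 \<and> set (snd Dq) \<subseteq> Q \<and>
      (\<forall>g\<in>S. \<forall>f\<in>S. p (\<lambda>x. g x - f x) \<le> fst Dq * (\<Sum>q\<leftarrow>snd Dq. q (\<lambda>x. g x - f x)))"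
  proof
    fix p assume "p \<in> F"
    then obtain D qs where "D \<ge> 0 \<and> set qs \<subseteq> Q \<and>
      (\<forall>g\<in>S. \<forall>f\<in>S. p (\<lambda>x. g x - f x) \<le> D * (\<Sum>q\<leftarrow>qs. q (\<lambda>x. g x - f x)))"
      using d1 F(2) by blast
    then show "\<exists>Dq. fst Dq \<ge> 0 \<and> set (snd Dq) \<subseteq> Q \<and>
      (\<forall>g\<in>S. \<forall>f\<in>S. p (\<lambda>x. g x - f x) \<le> fst Dq * (\<Sum>q\<leftarrow>snd Dq. q (\<lambda>x. g x - f x)))"
      by (intro exI[of _ "(D,qs)"]) simp
  qed
  from bchoice[OF this] obtain c where c: "\<And>p. p \<in> F \<Longrightarrow> fst (c p) \<ge> 0 \<and> set (snd (c p)) \<subseteq> Q \<and>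
      (\<forall>g\<in>S. \<forall>f\<in>S. p (\<lambda>x. g x - f x) \<le> fst (c p) * (\<Sum>q\<leftarrow>snd (c p). q (\<lambda>x. g x - f x)))"
    by blast
  define F' where "F' = (\<Union>p\<in>F. set (snd (c p)))"
  define Tot where "Tot = (\<Sum>p\<in>F. fst (c p) * real (length (snd (c p))))"
  have Tot: "Tot \<ge> 0" unfolding Tot_def using c by (auto intro!: sum_nonneg)
  define \<epsilon>' where "\<epsilon>' = \<epsilon> / (1 + Tot)"
  have \<epsilon>': "\<epsilon>' > 0" using F(3) Tot by (simp add: \<epsilon>'_def)
  have fin: "finite F'" unfolding F'_def using F(1) by auto
  have sub: "F' \<subseteq> Q" unfolding F'_def using c by auto
  have "{g \<in> S. \<forall>q \<in> F'. q (\<lambda>x. g x - f x) < \<epsilon>'} \<subseteq> V"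
  proof
    fix g assume "g \<in> {g \<in> S. \<forall>q \<in> F'. q (\<lambda>x. g x - f x) < \<epsilon>'}"
    then have gS: "g \<in> S" and gq: "\<And>q. q \<in> F' \<Longrightarrow> q (\<lambda>x. g x - f x) < \<epsilon>'" by auto
    have "p (\<lambda>x. g x - f x) < \<epsilon>" if p: "p \<in> F" for p
    proof -
      have "p (\<lambda>x. g x - f x) \<le> fst (c p) * (\<Sum>q\<leftarrow>snd (c p). q (\<lambda>x. g x - f x))"
        using c[OF p] gS fS by blast
      also have "\<dots> \<le> fst (c p) * (real (length (snd (c p))) * \<epsilon>')"
      proof (rule mult_left_mono)
        show "(\<Sum>q\<leftarrow>snd (c p). q (\<lambda>x. g x - f x)) \<le> real (length (snd (c p))) * \<epsilon>'"
          by (rule sum_list_le_len) (use gq p in \<open>auto simp: F'_def intro: less_imp_le\<close>)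
      qed (use c[OF p] in blast)
      also have "\<dots> = (fst (c p) * real (length (snd (c p)))) * \<epsilon>'" by simp
      also have "\<dots> \<le> Tot * \<epsilon>'"
      proof (rule mult_right_mono)
        show "fst (c p) * real (length (snd (c p))) \<le> Tot"
          unfolding Tot_def using F(1) p c by (intro member_le_sum) auto
      qed (use \<epsilon>' in simp)
      also have "\<dots> < (1 + Tot) * \<epsilon>'" using \<epsilon>' by simp
      also have "\<dots> = \<epsilon>" using Tot by (simp add: \<epsilon>'_def)
      finally show ?thesis .
    qed
    then show "g \<in> V" using F(4) gS by blast
  qed
  then show "\<exists>F \<epsilon>. finite F \<and> F \<subseteq> Q \<and> \<epsilon> > 0 \<and> {g \<in> S. \<forall>p \<in> F. p (\<lambda>x. g x - f x) < \<epsilon>} \<subseteq> V"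
    using fin sub \<epsilon>' by blast
qed

lemma topo_eq:
  fixes S :: "('a \<Rightarrow> 'b::ab_group_add) set" and P Q :: "(('a \<Rightarrow> 'b) \<Rightarrow> real) set"
  assumes d1: "\<And>p. p \<in> P \<Longrightarrow> \<exists>D qs. D \<ge> 0 \<and> set qs \<subseteq> Q \<and>
      (\<forall>g\<in>S. \<forall>f\<in>S. p (\<lambda>x. g x - f x) \<le> D * (\<Sum>q\<leftarrow>qs. q (\<lambda>x. g x - f x)))"
    and d2: "\<And>q. q \<in> Q \<Longrightarrow> \<exists>D ps. D \<ge> 0 \<and> set ps \<subseteq> P \<and>
      (\<forall>g\<in>S. \<forall>f\<in>S. q (\<lambda>x. g x - f x) \<le> D * (\<Sum>p\<leftarrow>ps. p (\<lambda>x. g x - f x)))"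
  shows "seminorm_topology S P = seminorm_topology S Q"
proof -
  have "seminorm_open S P = seminorm_open S Q"
  proof
    fix V show "seminorm_open S P V = seminorm_open S Q V"
      using topo_open[of P Q S, OF d1] topo_open[of Q P S, OF d2] by blast
  qed
  then show ?thesis by (simp add: seminorm_topology_def)
qed

lemma psem_eq: "psem U k \<alpha> = (\<lambda>\<phi>. SUP g. sigma U g ^ k * norm (Xalpha \<alpha> \<phi> g))"
  by (rule ext) (simp add: psem_def)
lemma qsem_eq: "qsem \<beta> \<gamma> = (\<lambda>f. SUP x. \<bar>monom \<gamma> x\<bar> * norm (pdalpha \<beta> f x))"
  by (rule ext) (simp add: qsem_def)

lemma psem_mem: "psem U k \<alpha> \<in> sigma_seminorms U"
  unfolding psem_eq sigma_seminorms_def by blast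
lemma qsem_mem: "qsem \<beta> \<gamma> \<in> schwartz_seminorms"
  unfolding qsem_eq schwartz_seminorms_def by blast

lemma sigma_sem_cases: "p \<in> sigma_seminorms U \<Longrightarrow> \<exists>k \<alpha>. p = psem U k \<alpha>"
  unfolding psem_eq sigma_seminorms_def by blast
lemma schwartz_sem_cases: "q \<in> schwartz_seminorms \<Longrightarrow> \<exists>\<beta> \<gamma>. q = qsem \<beta> \<gamma>"
  unfolding qsem_eq schwartz_seminorms_def by blast

theorem proposition5p3:
  fixes U :: "(real \<times> real \<times> real) set"
  assumes "compact U"
    and "0 \<in> interior U"
    and "\<forall>g \<in> U. ginv g \<in> U"
  shows "Ssigma U = Schwartz \<and>
    seminorm_topology (Ssigma U) (sigma_seminorms U) =
    seminorm_topology Schwartz schwartz_seminorms"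
proof -
  have eq: "Ssigma U = Schwartz" by (rule Ssigma_eq[OF assms(1,2)])
  have "seminorm_topology Schwartz (sigma_seminorms U) = seminorm_topology Schwartz schwartz_seminorms"
  proof (rule topo_eq)
    fix p assume "p \<in> sigma_seminorms U"
    then obtain k \<alpha> where p: "p = psem U k \<alpha>" using sigma_sem_cases by blast
    obtain D Q where DQ: "D \<ge> 0" "\<forall>h. smooth h \<longrightarrow> (\<forall>\<beta> \<gamma>. bdd_above (range (\<lambda>x. \<bar>monom \<gamma> x\<bar> * norm (pdalpha \<beta> h x)))) \<longrightarrow>
      bdd_above (range (\<lambda>x. sigma U x ^ k * norm (Xalpha \<alpha> h x))) \<and>
      psem U k \<alpha> h \<le> D * (\<Sum>(\<beta>,\<gamma>)\<leftarrow>Q. qsem \<beta> \<gamma> h)"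
      using dom1[OF assms(1,2), of k \<alpha>] by (elim exE conjE)
    define qs where "qs = map (\<lambda>(\<beta>,\<gamma>). qsem \<beta> \<gamma>) Q"
    have "set qs \<subseteq> schwartz_seminorms" unfolding qs_def using qsem_mem by auto
    moreover have "p (\<lambda>x. g x - f x) \<le> D * (\<Sum>q\<leftarrow>qs. q (\<lambda>x. g x - f x))"
      if g: "g \<in> Schwartz" and f: "f \<in> Schwartz" for g f
    proof -
      have hS: "(\<lambda>x. g x - f x) \<in> Schwartz" by (rule Schwartz_diff[OF g f])
      then have hs: "smooth (\<lambda>x. g x - f x)"
        and hb: "\<forall>\<beta> \<gamma>. bdd_above (range (\<lambda>x. \<bar>monom \<gamma> x\<bar> * norm (pdalpha \<beta> (\<lambda>x. g x - f x) x)))"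
        by (auto simp: Schwartz_def)
      have "psem U k \<alpha> (\<lambda>x. g x - f x) \<le> D * (\<Sum>(\<beta>,\<gamma>)\<leftarrow>Q. qsem \<beta> \<gamma> (\<lambda>x. g x - f x))"
        using mp[OF mp[OF spec[OF DQ(2), of "\<lambda>x. g x - f x"] hs] hb] by (rule conjunct2)
      moreover have "(\<Sum>(\<beta>,\<gamma>)\<leftarrow>Q. qsem \<beta> \<gamma> (\<lambda>x. g x - f x)) = (\<Sum>q\<leftarrow>qs. q (\<lambda>x. g x - f x))"
        unfolding qs_def by (simp add: o_def split_def)
      ultimately show ?thesis by (simp add: p)
    qed
    ultimately show "\<exists>D qs. D \<ge> 0 \<and> set qs \<subseteq> schwartz_seminorms \<and>
      (\<forall>g\<in>Schwartz. \<forall>f\<in>Schwartz. p (\<lambda>x. g x - f x) \<le> D * (\<Sum>q\<leftarrow>qs. q (\<lambda>x. g x - f x)))"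
      using DQ(1) by blast
  next
    fix q assume "q \<in> schwartz_seminorms"
    then obtain \<beta> \<gamma> where q: "q = qsem \<beta> \<gamma>" using schwartz_sem_cases by blast
    obtain D Q where DQ: "D \<ge> 0" "\<forall>h. smooth h \<longrightarrow> (\<forall>k \<alpha>. bdd_above (range (\<lambda>x. sigma U x ^ k * norm (Xalpha \<alpha> h x)))) \<longrightarrow>
      bdd_above (range (\<lambda>x. \<bar>monom \<gamma> x\<bar> * norm (pdalpha \<beta> h x))) \<and>
      qsem \<beta> \<gamma> h \<le> D * (\<Sum>(k,\<alpha>)\<leftarrow>Q. psem U k \<alpha> h)"
      using dom2[OF assms(1,2), of \<gamma> \<beta>] by (elim exE conjE)
    define ps where "ps = map (\<lambda>(k,\<alpha>). psem U k \<alpha>) Q"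
    have "set ps \<subseteq> sigma_seminorms U" unfolding ps_def using psem_mem by auto
    moreover have "q (\<lambda>x. g x - f x) \<le> D * (\<Sum>p\<leftarrow>ps. p (\<lambda>x. g x - f x))"
      if g: "g \<in> Schwartz" and f: "f \<in> Schwartz" for g f
    proof -
      have hS: "(\<lambda>x. g x - f x) \<in> Ssigma U" using Schwartz_diff[OF g f] eq by simp
      then have hs: "smooth (\<lambda>x. g x - f x)"
        and hb: "\<forall>k \<alpha>. bdd_above (range (\<lambda>x. sigma U x ^ k * norm (Xalpha \<alpha> (\<lambda>x. g x - f x) x)))"
        by (auto simp: Ssigma_def)
      have "qsem \<beta> \<gamma> (\<lambda>x. g x - f x) \<le> D * (\<Sum>(k,\<alpha>)\<leftarrow>Q. psem U k \<alpha> (\<lambda>x. g x - f x))"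
        using mp[OF mp[OF spec[OF DQ(2), of "\<lambda>x. g x - f x"] hs] hb] by (rule conjunct2)
      moreover have "(\<Sum>(k,\<alpha>)\<leftarrow>Q. psem U k \<alpha> (\<lambda>x. g x - f x)) = (\<Sum>p\<leftarrow>ps. p (\<lambda>x. g x - f x))"
        unfolding ps_def by (simp add: o_def split_def)
      ultimately show ?thesis by (simp add: q)
    qed
    ultimately show "\<exists>D ps. D \<ge> 0 \<and> set ps \<subseteq> sigma_seminorms U \<and>
      (\<forall>g\<in>Schwartz. \<forall>f\<in>Schwartz. q (\<lambda>x. g x - f x) \<le> D * (\<Sum>p\<leftarrow>ps. p (\<lambda>x. g x - f x)))"
      using DQ(1) by blast
  qed
  then show ?thesis using eq by simp
qed

end
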